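(* Let $n\in\mathbb{R}^+$, $f\in D_{HK}$ and $\phi\in BV[a,b]$. Then $$\int_a^b\phi(x)\,\mathcal{J}_a^nf(x)\,dx=\int_a^b f(t)\,\mathcal{J}_{b_-}^n\phi(t)\,dt.$$
   Context: Fix real numbers $a<b$; $BV[a,b]$ is the space of functions of bounded variation on $[a,b]$. Let $C_0=\{F\in C[a,b]:F(a)=0\}$. A distribution $f$ on $(a,b)$ is Henstock–Kurzweil integrable if $f=F'$ (distributional derivative) for some (unique) $F\in C_0$; $\int_c^d f=F(d)-F(c)$, and for $g\in BV[a,b]$, $\int_a^b fg=F(b)g(b)-\int_a^bF\,dg$. $D_{HK}$ is the space of these with the Alexiewicz norm $\|f\|_A=\sup_{[a,b]}|F|$; $L^1[a,b]$ is dense in it. Left Riemann–Liouville integral: for $n\ge1$, $\mathcal{J}_a^nf(x)=\frac{1}{\Gamma(n)}\int_a^x(x-t)^{n-1}f(t)\,dt$; for $0<n<1$, $\mathcal{J}_a^nf(x)=\frac{1}{\Gamma(n)}\lim_{k}\int_a^x(x-t)^{n-1}f_k(t)\,dt$ with $(f_k)\subset L^1[a,b]$, $\|f_k-f\|_A\to0$. Right-sided Riemann–Liouville integral: for $n\ge1$, $\mathcal{J}_{b_-}^n\phi(x)=\frac{1}{\Gamma(n)}\int_x^b(t-x)^{n-1}\phi(t)\,dt$; for $0<n<1$ defined analogously by the limit over $L^1$ approximations (for $\phi\in BV[a,b]$ it is the classical Lebesgue integral). *)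

theory Defs
  imports "HOL-Analysis.Analysis"
begin

definition is_partition :: "real \<Rightarrow> real \<Rightarrow> nat \<Rightarrow> (nat \<Rightarrow> real) \<Rightarrow> bool" where
  "is_partition a b m x \<longleftrightarrow> x 0 = a \<and> x m = b \<and> (\<forall>i<m. x i \<le> x (Suc i))"

definition bounded_var :: "(real \<Rightarrow> real) \<Rightarrow> real \<Rightarrow> real \<Rightarrow> bool" where
  "bounded_var g a b \<longleftrightarrow>
     (\<exists>M. \<forall>m x. is_partition a b m x \<longrightarrow> (\<Sum>i<m. \<bar>g (x (Suc i)) - g (x i)\<bar>) \<le> M)"

definition has_RS_integral :: "(real \<Rightarrow> real) \<Rightarrow> (real \<Rightarrow> real) \<Rightarrow> real \<Rightarrow> real \<Rightarrow> real \<Rightarrow> bool" where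
  "has_RS_integral F g a b I \<longleftrightarrow>
     (\<forall>\<epsilon>>0. \<exists>\<delta>>0. \<forall>m x \<xi>.
        is_partition a b m x \<and> (\<forall>i<m. x i \<le> \<xi> i \<and> \<xi> i \<le> x (Suc i) \<and> x (Suc i) - x i < \<delta>)
        \<longrightarrow> \<bar>(\<Sum>i<m. F (\<xi> i) * (g (x (Suc i)) - g (x i))) - I\<bar> < \<epsilon>)"

definition RS_integral :: "(real \<Rightarrow> real) \<Rightarrow> (real \<Rightarrow> real) \<Rightarrow> real \<Rightarrow> real \<Rightarrow> real" where
  "RS_integral F g a b = (THE I. has_RS_integral F g a b I)"

(* A Henstock--Kurzweil integrable distribution f on (a,b) is represented by its primitive
   F \<in> C_0 (continuous on [a,b], F a = 0), f = F'.  For g \<in> BV[c,d] with c \<ge> a: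
   \<integral>_c^d f g = F(d) g(d) - F(c) g(c) - \<integral>_c^d F dg;  with c = a this is F(d) g(d) - \<integral>_a^d F dg. *)
definition hk_pair :: "(real \<Rightarrow> real) \<Rightarrow> (real \<Rightarrow> real) \<Rightarrow> real \<Rightarrow> real \<Rightarrow> real" where
  "hk_pair F g a d = F d * g d - RS_integral F g a d"

(* kernel (x - t)^(n-1), with the convention (x-t)^0 = 1 *)
definition rl_kernel :: "real \<Rightarrow> real \<Rightarrow> real" where
  "rl_kernel n y = (if n = 1 then 1 else y powr (n - 1))"

(* Left Riemann--Liouville integral, n \<ge> 1, of f = F' \<in> D_HK (pointwise function):
   J_a^n f(x) = 1/\<Gamma>(n) \<integral>_a^x (x-t)^(n-1) f(t) dt *)
definition RL_left :: "real \<Rightarrow> real \<Rightarrow> (real \<Rightarrow> real) \<Rightarrow> real \<Rightarrow> real" where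
  "RL_left a n F x = (1 / Gamma n) * hk_pair F (\<lambda>t. rl_kernel n (x - t)) a x"

definition RL_left_L1 :: "real \<Rightarrow> real \<Rightarrow> (real \<Rightarrow> real) \<Rightarrow> real \<Rightarrow> real" where
  "RL_left_L1 a n g x = (1 / Gamma n) * integral {a..x} (\<lambda>t. rl_kernel n (x - t) * g t)"

definition alex_dist_L1 :: "real \<Rightarrow> real \<Rightarrow> (real \<Rightarrow> real) \<Rightarrow> (real \<Rightarrow> real) \<Rightarrow> real" where
  "alex_dist_L1 a b g F = (SUP x\<in>{a..b}. \<bar>integral {a..x} g - F x\<bar>)"

(* For 0 < n < 1: J_a^n f is the D_HK (Alexiewicz-norm) limit of J_a^n f_k for any
   sequence f_k \<in> L^1[a,b] with \<parallel>f_k - f\<parallel>_A \<rightarrow> 0.  Being an element of D_HK it is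
   represented by its primitive P \<in> C_0 (normalised to 0 outside [a,b]). *)
definition RL_left_prim :: "real \<Rightarrow> real \<Rightarrow> real \<Rightarrow> (real \<Rightarrow> real) \<Rightarrow> real \<Rightarrow> real" where
  "RL_left_prim a b n F = (THE P. continuous_on {a..b} P \<and> P a = 0 \<and> (\<forall>x. x \<notin> {a..b} \<longrightarrow> P x = 0) \<and>
     (\<forall>fs. (\<forall>k. fs k absolutely_integrable_on {a..b}) \<and> (\<lambda>k. alex_dist_L1 a b (fs k) F) \<longlonglongrightarrow> 0
        \<longrightarrow> (\<lambda>k. alex_dist_L1 a b (RL_left_L1 a n (fs k)) P) \<longlonglongrightarrow> 0))"

definition RL_right :: "real \<Rightarrow> real \<Rightarrow> (real \<Rightarrow> real) \<Rightarrow> real \<Rightarrow> real" where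
  "RL_right b n \<phi> x = (1 / Gamma n) * integral {x..b} (\<lambda>t. rl_kernel n (t - x) * \<phi> t)"

end

theory Submission
  imports Defs
begin


definition rs_sum :: "(real\<Rightarrow>real) \<Rightarrow> (real\<Rightarrow>real) \<Rightarrow> nat \<Rightarrow> (nat\<Rightarrow>real) \<Rightarrow> (nat\<Rightarrow>real) \<Rightarrow> real" where
 "rs_sum F g m x \<xi> = (\<Sum>i<m. F (\<xi> i) * (g (x (Suc i)) - g (x i)))"

definition rsfine :: "real \<Rightarrow> real \<Rightarrow> real \<Rightarrow> nat \<Rightarrow> (nat\<Rightarrow>real) \<Rightarrow> (nat\<Rightarrow>real) \<Rightarrow> bool" where
 "rsfine a b \<delta> m x \<xi> \<longleftrightarrow> is_partition a b m x \<and> (\<forall>i<m. x i \<le> \<xi> i \<and> \<xi> i \<le> x (Suc i) \<and> x (Suc i) - x i < \<delta>)"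

lemma has_RS_fine: "has_RS_integral F g a b I \<longleftrightarrow>
  (\<forall>\<epsilon>>0. \<exists>\<delta>>0. \<forall>m x \<xi>. rsfine a b \<delta> m x \<xi> \<longrightarrow> \<bar>rs_sum F g m x \<xi> - I\<bar> < \<epsilon>)"
  unfolding has_RS_integral_def rsfine_def rs_sum_def by blast

lemma partition_mono: "is_partition a b m x \<Longrightarrow> i \<le> j \<Longrightarrow> j \<le> m \<Longrightarrow> x i \<le> x j"
proof (induction j)
  case 0 then show ?case by simp
next
  case (Suc j)
  show ?case
  proof (cases "i = Suc j")
    case False
    then have "x i \<le> x j" using Suc by auto
    moreover have "x j \<le> x (Suc j)" using Suc.prems by (auto simp: is_partition_def)
    ultimately show ?thesis by linarith
  qed simp
qed

lemma partition_range: "is_partition a b m x \<Longrightarrow> i \<le> m \<Longrightarrow> a \<le> x i \<and> x i \<le> b"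
  using partition_mono[of a b m x 0 i] partition_mono[of a b m x i m] by (auto simp: is_partition_def)

lemma partition_le: "is_partition a b m x \<Longrightarrow> a \<le> b"
  using partition_range[of a b m x 0] by (auto simp: is_partition_def)

lemma rsfine_exists: assumes "a \<le> b" "\<delta> > 0" shows "\<exists>m x \<xi>. rsfine a b \<delta> m x \<xi>"
proof -
  obtain n::nat where n: "(b-a)/\<delta> < real n" using reals_Archimedean2 by blast
  define m where "m = Suc n"
  have m0: "real m > 0" by (simp add: m_def)
  have "(b-a) < real m * \<delta>" using n assms by (simp add: m_def field_simps)
  then have md: "(b-a)/real m < \<delta>" using m0 by (simp add: field_simps)
  define x where "x i = a + real i*(b-a)/real m" for i
  have "rsfine a b \<delta> m x x"
    unfolding rsfine_def is_partition_def
  proof (intro conjI allI impI)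
    show "x 0 = a" by (simp add: x_def)
    show "x m = b" using m0 by (simp add: x_def)
  next
    fix i assume "i < m"
    have "x (Suc i) - x i = (b-a)/real m" unfolding x_def using m0 by (simp add: divide_simps) (simp add: algebra_simps)
    moreover have "(b-a)/real m \<ge> 0" using assms m0 by simp
    ultimately show "x i \<le> x (Suc i)" by linarith
  next
    fix i assume "i < m"
    have "x (Suc i) - x i = (b-a)/real m" unfolding x_def using m0 by (simp add: divide_simps) (simp add: algebra_simps)
    moreover have "(b-a)/real m \<ge> 0" using assms m0 by simp
    ultimately show "x i \<le> x (Suc i)" "x (Suc i) - x i < \<delta>" using md by linarith+
  qed auto
  then show ?thesis by blast
qed

lemma RS_unique: assumes "a \<le> b" "has_RS_integral F g a b I" "has_RS_integral F g a b J" shows "I = J"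
proof (rule ccontr)
  assume ne: "I \<noteq> J"
  define \<epsilon> where "\<epsilon> = \<bar>I - J\<bar>/2"
  have e: "\<epsilon> > 0" using ne by (simp add: \<epsilon>_def)
  obtain d1 where d1: "d1 > 0" "\<And>m x \<xi>. rsfine a b d1 m x \<xi> \<Longrightarrow> \<bar>rs_sum F g m x \<xi> - I\<bar> < \<epsilon>"
    using assms(2) e unfolding has_RS_fine by blast
  obtain d2 where d2: "d2 > 0" "\<And>m x \<xi>. rsfine a b d2 m x \<xi> \<Longrightarrow> \<bar>rs_sum F g m x \<xi> - J\<bar> < \<epsilon>"
    using assms(3) e unfolding has_RS_fine by blast
  obtain m x \<xi> where f: "rsfine a b (min d1 d2) m x \<xi>" using rsfine_exists[OF assms(1), of "min d1 d2"] d1 d2 by auto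
  have "rsfine a b d1 m x \<xi>" "rsfine a b d2 m x \<xi>" using f by (auto simp: rsfine_def)
  then have "\<bar>rs_sum F g m x \<xi> - I\<bar> < \<epsilon>" "\<bar>rs_sum F g m x \<xi> - J\<bar> < \<epsilon>" using d1 d2 by auto
  then show False unfolding \<epsilon>_def by (simp add: abs_if split: if_splits)
qed

lemma RS_integral_eqI: "a \<le> b \<Longrightarrow> has_RS_integral F g a b I \<Longrightarrow> RS_integral F g a b = I"
  unfolding RS_integral_def by (rule the_equality) (auto intro: RS_unique)

lemma partition_integral_sum: fixes h :: "real \<Rightarrow> real" shows
  "is_partition a b m x \<Longrightarrow> h integrable_on {a..b} \<Longrightarrow>
   (\<Sum>i<m. integral {x i..x (Suc i)} h) = integral {a..b} h"
proof (induction m arbitrary: b)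
  case 0 then have "x 0 = a" "x 0 = b" by (simp_all add: is_partition_def)
  then have "a = b" by simp
  then show ?case by simp
next
  case (Suc m)
  have p: "is_partition a (x m) m x" using Suc.prems by (auto simp: is_partition_def)
  have le: "a \<le> x m" "x m \<le> b" using partition_range[OF Suc.prems(1), of m] by auto
  have "{a..x m} \<subseteq> {a..b}" using le by auto
  then have "h integrable_on {a..x m}" using Suc.prems(2) integrable_on_subinterval by blast
  then have "(\<Sum>i<m. integral {x i..x (Suc i)} h) = integral {a..x m} h" using Suc.IH[OF p] by blast
  moreover have "x (Suc m) = b" using Suc.prems(1) by (simp add: is_partition_def)
  ultimately show ?case using Henstock_Kurzweil_Integration.integral_combine[OF le Suc.prems(2)] by simp
qed

lemma partition_telescope: fixes g :: "real \<Rightarrow> real"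
  shows "is_partition a b m x \<Longrightarrow> (\<Sum>i<m. g (x (Suc i)) - g (x i)) = g b - g a"
  using sum_lessThan_telescope[of "\<lambda>i. g (x i)" m] by (simp add: is_partition_def)



lemma abs_int_abs: fixes h :: "real \<Rightarrow> real"
  shows "h absolutely_integrable_on S \<Longrightarrow> (\<lambda>t. \<bar>h t\<bar>) integrable_on S"
  by (auto simp: absolutely_integrable_on_def)

lemma cont_mult_abs_int: fixes F h :: "real \<Rightarrow> real"
  assumes "continuous_on {a..b} F" "h absolutely_integrable_on {a..b}"
  shows "(\<lambda>t. F t * h t) absolutely_integrable_on {a..b}"
proof (rule absolutely_integrable_bounded_measurable_product_real)
  show "F \<in> borel_measurable (lebesgue_on {a..b})"
    using assms(1) by (simp add: continuous_imp_measurable_on_sets_lebesgue)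
  show "bounded (F ` {a..b})" using assms(1) compact_continuous_image compact_imp_bounded by blast
qed (use assms in auto)

lemma RS_indef_cont:
  fixes F g h :: "real \<Rightarrow> real"
  assumes ab: "a \<le> b" and Fc: "continuous_on {a..b} F" and hi: "h absolutely_integrable_on {a..b}"
    and gh: "\<And>s t. a \<le> s \<Longrightarrow> s \<le> t \<Longrightarrow> t \<le> b \<Longrightarrow> g t - g s = integral {s..t} h"
  shows "has_RS_integral F g a b (integral {a..b} (\<lambda>t. F t * h t))"
  unfolding has_RS_fine
proof (intro allI impI)
  fix \<epsilon> :: real assume e: "\<epsilon> > 0"
  define K where "K = integral {a..b} (\<lambda>t. \<bar>h t\<bar>)"
  have habs: "(\<lambda>t. \<bar>h t\<bar>) integrable_on {a..b}" using abs_int_abs[OF hi] .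
  have K0: "K \<ge> 0" unfolding K_def by (rule integral_nonneg[OF habs]) auto
  define \<eta> where "\<eta> = \<epsilon> / (K + 1)"
  have eta: "\<eta> > 0" using e K0 by (simp add: \<eta>_def)
  have etaK: "\<eta> * K < \<epsilon>"
  proof -
    have "\<eta> * K = \<epsilon> * (K / (K+1))" by (simp add: \<eta>_def)
    also have "\<dots> < \<epsilon> * 1" using e K0 by (intro mult_strict_left_mono) auto
    finally show ?thesis by simp
  qed
  have uc: "uniformly_continuous_on {a..b} F" using Fc compact_uniformly_continuous by blast
  then obtain \<delta> where d: "\<delta> > 0" "\<And>x x'. x \<in> {a..b} \<Longrightarrow> x' \<in> {a..b} \<Longrightarrow> dist x' x < \<delta> \<Longrightarrow> dist (F x') (F x) < \<eta>"
    using uc[unfolded uniformly_continuous_on_def, rule_format, OF eta] by blast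
  have Fhi: "(\<lambda>t. F t * h t) absolutely_integrable_on {a..b}" using cont_mult_abs_int[OF Fc hi] .
  show "\<exists>\<delta>>0. \<forall>m x \<xi>. rsfine a b \<delta> m x \<xi> \<longrightarrow> \<bar>rs_sum F g m x \<xi> - integral {a..b} (\<lambda>t. F t * h t)\<bar> < \<epsilon>"
  proof (intro exI[of _ \<delta>] conjI allI impI)
    show "\<delta> > 0" by fact
    fix m x \<xi> assume f: "rsfine a b \<delta> m x \<xi>"
    have P: "is_partition a b m x" using f by (simp add: rsfine_def)
    have xr: "\<And>i. i \<le> m \<Longrightarrow> a \<le> x i \<and> x i \<le> b" using partition_range[OF P] by blast
    have sub: "{x i..x (Suc i)} \<subseteq> {a..b}" if "i < m" for i using xr[of i] xr[of "Suc i"] that by auto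
    have hsub: "h integrable_on {x i..x (Suc i)}" if i: "i < m" for i
      by (rule integrable_on_subinterval[OF set_lebesgue_integral_eq_integral(1)[OF hi] sub[OF i]])
    have Fhsub: "(\<lambda>t. F t * h t) integrable_on {x i..x (Suc i)}" if i: "i < m" for i
      by (rule integrable_on_subinterval[OF set_lebesgue_integral_eq_integral(1)[OF Fhi] sub[OF i]])
    have habssub: "(\<lambda>t. \<bar>h t\<bar>) integrable_on {x i..x (Suc i)}" if i: "i < m" for i
      by (rule integrable_on_subinterval[OF habs sub[OF i]])
    have "rs_sum F g m x \<xi> - integral {a..b} (\<lambda>t. F t * h t)
        = (\<Sum>i<m. integral {x i..x (Suc i)} (\<lambda>t. (F (\<xi> i) - F t) * h t))"
    proof -
      have "rs_sum F g m x \<xi> = (\<Sum>i<m. integral {x i..x (Suc i)} (\<lambda>t. F (\<xi> i) * h t))"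
        unfolding rs_sum_def
      proof (rule sum.cong[OF refl])
        fix i assume "i \<in> {..<m}"
        then have i: "i < m" by simp
        have "x i \<le> x (Suc i)" using P i by (simp add: is_partition_def)
        then have "g (x (Suc i)) - g (x i) = integral {x i..x (Suc i)} h"
          using gh xr i by simp
        then show "F (\<xi> i) * (g (x (Suc i)) - g (x i)) = integral {x i..x (Suc i)} (\<lambda>t. F (\<xi> i) * h t)"
          by simp
      qed
      moreover have "integral {a..b} (\<lambda>t. F t * h t) = (\<Sum>i<m. integral {x i..x (Suc i)} (\<lambda>t. F t * h t))"
        using partition_integral_sum[OF P set_lebesgue_integral_eq_integral(1)[OF Fhi]] by simp
      ultimately have "rs_sum F g m x \<xi> - integral {a..b} (\<lambda>t. F t * h t) =
          (\<Sum>i<m. integral {x i..x (Suc i)} (\<lambda>t. F (\<xi> i) * h t) - integral {x i..x (Suc i)} (\<lambda>t. F t * h t))"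
        by (simp add: sum_subtractf)
      also have "\<dots> = (\<Sum>i<m. integral {x i..x (Suc i)} (\<lambda>t. (F (\<xi> i) - F t) * h t))"
      proof (rule sum.cong[OF refl])
        fix i assume "i \<in> {..<m}"
        then have i: "i < m" by simp
        have "integral {x i..x (Suc i)} (\<lambda>t. F (\<xi> i) * h t - F t * h t) =
              integral {x i..x (Suc i)} (\<lambda>t. F (\<xi> i) * h t) - integral {x i..x (Suc i)} (\<lambda>t. F t * h t)"
          by (rule Henstock_Kurzweil_Integration.integral_diff[OF integrable_on_mult_right[OF hsub[OF i]] Fhsub[OF i]])
        then show "integral {x i..x (Suc i)} (\<lambda>t. F (\<xi> i) * h t) - integral {x i..x (Suc i)} (\<lambda>t. F t * h t) =
           integral {x i..x (Suc i)} (\<lambda>t. (F (\<xi> i) - F t) * h t)"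
          by (simp add: algebra_simps)
      qed
      finally show ?thesis .
    qed
    also have "\<bar>\<dots>\<bar> \<le> (\<Sum>i<m. \<bar>integral {x i..x (Suc i)} (\<lambda>t. (F (\<xi> i) - F t) * h t)\<bar>)"
      by (rule sum_abs)
    also have "\<dots> \<le> (\<Sum>i<m. integral {x i..x (Suc i)} (\<lambda>t. \<eta> * \<bar>h t\<bar>))"
    proof (rule sum_mono)
      fix i assume "i \<in> {..<m}"
      then have i: "i < m" by simp
      have int1: "(\<lambda>t. (F (\<xi> i) - F t) * h t) integrable_on {x i..x (Suc i)}"
      proof -
        have "(\<lambda>t. F (\<xi> i) * h t - F t * h t) integrable_on {x i..x (Suc i)}"
          by (rule integrable_diff[OF integrable_on_mult_right[OF hsub[OF i]] Fhsub[OF i]])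
        then show ?thesis by (simp add: algebra_simps)
      qed
      have int2: "(\<lambda>t. \<eta> * \<bar>h t\<bar>) integrable_on {x i..x (Suc i)}"
        by (rule integrable_on_mult_right[OF habssub[OF i]])
      have "norm (integral {x i..x (Suc i)} (\<lambda>t. (F (\<xi> i) - F t) * h t)) \<le> integral {x i..x (Suc i)} (\<lambda>t. \<eta> * \<bar>h t\<bar>)"
      proof (rule Henstock_Kurzweil_Integration.integral_norm_bound_integral[OF int1 int2])
        fix t assume t: "t \<in> {x i..x (Suc i)}"
        have "\<xi> i \<in> {x i..x (Suc i)}" using f i by (simp add: rsfine_def)
        then have "dist (\<xi> i) t < \<delta>" using f i t by (auto simp: rsfine_def dist_real_def)
        moreover have "t \<in> {a..b}" "\<xi> i \<in> {a..b}" using sub[OF i] t \<open>\<xi> i \<in> _\<close> by auto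
        ultimately have "dist (F (\<xi> i)) (F t) < \<eta>" using d(2) by blast
        then have "\<bar>F (\<xi> i) - F t\<bar> \<le> \<eta>" by (simp add: dist_real_def)
        then show "norm ((F (\<xi> i) - F t) * h t) \<le> \<eta> * \<bar>h t\<bar>"
          by (simp add: abs_mult mult_right_mono)
      qed
      then show "\<bar>integral {x i..x (Suc i)} (\<lambda>t. (F (\<xi> i) - F t) * h t)\<bar> \<le> integral {x i..x (Suc i)} (\<lambda>t. \<eta> * \<bar>h t\<bar>)"
        by simp
    qed
    also have "\<dots> = \<eta> * K"
    proof -
      have "(\<Sum>i<m. integral {x i..x (Suc i)} (\<lambda>t. \<eta> * \<bar>h t\<bar>)) = (\<Sum>i<m. \<eta> * integral {x i..x (Suc i)} (\<lambda>t. \<bar>h t\<bar>))"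
        by simp
      also have "\<dots> = \<eta> * (\<Sum>i<m. integral {x i..x (Suc i)} (\<lambda>t. \<bar>h t\<bar>))" by (simp add: sum_distrib_left)
      also have "\<dots> = \<eta> * K" unfolding K_def using partition_integral_sum[OF P habs] by simp
      finally show ?thesis .
    qed
    finally show "\<bar>rs_sum F g m x \<xi> - integral {a..b} (\<lambda>t. F t * h t)\<bar> < \<epsilon>" using etaK by linarith
  qed
qed



definition vsum :: "(real \<Rightarrow> real) \<Rightarrow> nat \<Rightarrow> (nat \<Rightarrow> real) \<Rightarrow> real" where
  "vsum g m x = (\<Sum>i<m. \<bar>g (x (Suc i)) - g (x i)\<bar>)"

definition bv_le :: "(real \<Rightarrow> real) \<Rightarrow> real \<Rightarrow> real \<Rightarrow> real \<Rightarrow> bool" where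
  "bv_le g a b M \<longleftrightarrow> (\<forall>m x. is_partition a b m x \<longrightarrow> vsum g m x \<le> M)"

lemma bounded_var_bv_le: "bounded_var g a b \<longleftrightarrow> (\<exists>M. bv_le g a b M)"
  unfolding bounded_var_def bv_le_def vsum_def by (rule refl)

lemma vsum_nonneg: "vsum g m x \<ge> 0"
  unfolding vsum_def by (rule sum_nonneg) simp

lemma partition_extend:
  assumes "is_partition a c m x" "c \<le> d"
  shows "is_partition a d (Suc m) (x(Suc m := d))" "vsum g (Suc m) (x(Suc m := d)) = vsum g m x + \<bar>g d - g c\<bar>"
proof -
  have xm: "x m = c" using assms(1) by (simp add: is_partition_def)
  show "is_partition a d (Suc m) (x(Suc m := d))"
    using assms unfolding is_partition_def
    by (auto simp: less_Suc_eq)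
  have "vsum g (Suc m) (x(Suc m := d)) = (\<Sum>i<m. \<bar>g ((x(Suc m := d)) (Suc i)) - g ((x(Suc m := d)) i)\<bar>) + \<bar>g d - g c\<bar>"
    unfolding vsum_def using xm by simp
  also have "(\<Sum>i<m. \<bar>g ((x(Suc m := d)) (Suc i)) - g ((x(Suc m := d)) i)\<bar>) = vsum g m x"
    unfolding vsum_def by (rule sum.cong) auto
  finally show "vsum g (Suc m) (x(Suc m := d)) = vsum g m x + \<bar>g d - g c\<bar>" .
qed

lemma trivial_partition: "a \<le> x \<Longrightarrow> is_partition a x 1 (\<lambda>i. if i = 0 then a else x)"
  by (simp add: is_partition_def)

lemma bv_le_nonneg: "bv_le g a b M \<Longrightarrow> a \<le> b \<Longrightarrow> M \<ge> 0"
  using trivial_partition[of a b] vsum_nonneg[of g 1 "\<lambda>i. if i = 0 then a else b"]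
  unfolding bv_le_def by force

lemma bv_le_sub: assumes "bv_le g a b M" "x \<le> b" "is_partition a x m p" shows "vsum g m p \<le> M"
proof -
  have "vsum g (Suc m) (p(Suc m := b)) \<le> M" using assms partition_extend(1)[OF assms(3) assms(2)]
    unfolding bv_le_def by blast
  then show ?thesis using partition_extend(2)[OF assms(3) assms(2), of g] by simp
qed

lemma bv_le_point: assumes "bv_le g a b M" "a \<le> x" "x \<le> b" shows "\<bar>g x - g a\<bar> \<le> M"
  using bv_le_sub[OF assms(1) assms(3) trivial_partition[OF assms(2)]] by (simp add: vsum_def)

lemma bv_bounded: assumes "bv_le g a b M" "a \<le> x" "x \<le> b" shows "\<bar>g x\<bar> \<le> \<bar>g a\<bar> + M"
  using bv_le_point[OF assms] by linarith

definition bvar :: "(real \<Rightarrow> real) \<Rightarrow> real \<Rightarrow> real \<Rightarrow> real" where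
  "bvar g a x = Sup {vsum g m p | m p. is_partition a x m p}"

lemma bvar_upper: assumes "bv_le g a b M" "x \<le> b" "is_partition a x m p" shows "vsum g m p \<le> bvar g a x"
  unfolding bvar_def
proof (rule cSup_upper)
  show "vsum g m p \<in> {vsum g m p |m p. is_partition a x m p}" using assms(3) by blast
  show "bdd_above {vsum g m p |m p. is_partition a x m p}"
    unfolding bdd_above_def using bv_le_sub[OF assms(1) assms(2)] by blast
qed

lemma bvar_le: assumes "bv_le g a b M" "a \<le> x" "x \<le> b" shows "bvar g a x \<le> M"
  unfolding bvar_def
proof (rule cSup_least)
  show "{vsum g m p |m p. is_partition a x m p} \<noteq> {}" using trivial_partition[OF assms(2)] by blast
  show "\<And>y. y \<in> {vsum g m p |m p. is_partition a x m p} \<Longrightarrow> y \<le> M"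
    using bv_le_sub[OF assms(1) assms(3)] by blast
qed

lemma bvar_nonneg: assumes "bv_le g a b M" "a \<le> x" "x \<le> b" shows "bvar g a x \<ge> 0"
  using bvar_upper[OF assms(1) assms(3) trivial_partition[OF assms(2)]] vsum_nonneg[of g] by (meson order_trans)

lemma bvar_step: assumes "bv_le g a b M" "a \<le> x" "x \<le> y" "y \<le> b"
  shows "bvar g a x + \<bar>g y - g x\<bar> \<le> bvar g a y"
proof -
  have "bvar g a x \<le> bvar g a y - \<bar>g y - g x\<bar>"
    unfolding bvar_def[of g a x]
  proof (rule cSup_least)
    show "{vsum g m p |m p. is_partition a x m p} \<noteq> {}" using trivial_partition[OF assms(2)] by blast
    fix z assume "z \<in> {vsum g m p |m p. is_partition a x m p}"
    then obtain m p where z: "z = vsum g m p" and p: "is_partition a x m p" by blast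
    have "vsum g (Suc m) (p(Suc m := y)) \<le> bvar g a y"
      by (rule bvar_upper[OF assms(1) assms(4) partition_extend(1)[OF p assms(3)]])
    then show "z \<le> bvar g a y - \<bar>g y - g x\<bar>" using partition_extend(2)[OF p assms(3), of g] z by simp
  qed
  then show ?thesis by simp
qed

lemma bvar_osc: assumes "bv_le g a b M" "a \<le> s" "s \<le> t" "t \<le> b"
  shows "\<bar>g t - g s\<bar> \<le> bvar g a t - bvar g a s"
  using bvar_step[OF assms] by linarith

lemma bvar_mono: assumes "bv_le g a b M" "a \<le> s" "s \<le> t" "t \<le> b"
  shows "bvar g a s \<le> bvar g a t" "bvar g a s - g s \<le> bvar g a t - g t"
  using bvar_step[OF assms] by linarith+

definition clampr :: "real \<Rightarrow> real \<Rightarrow> real \<Rightarrow> real" where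
  "clampr a b x = max a (min x b)"

lemma clampr_in: "a \<le> b \<Longrightarrow> a \<le> clampr a b x \<and> clampr a b x \<le> b"
  by (simp add: clampr_def)

lemma clampr_id: "x \<in> {a..b} \<Longrightarrow> clampr a b x = x"
  by (simp add: clampr_def)

lemma clampr_mono: "a \<le> b \<Longrightarrow> x \<le> y \<Longrightarrow> clampr a b x \<le> clampr a b y"
  by (simp add: clampr_def)

lemma bv_clamp_measurable:
  assumes "bounded_var g a b" "a \<le> b"
  shows "(\<lambda>x. g (clampr a b x)) \<in> borel_measurable borel"
proof -
  obtain M where M: "bv_le g a b M" using assms(1) bounded_var_bv_le by blast
  define V where "V x = bvar g a (clampr a b x)" for x
  define W where "W x = bvar g a (clampr a b x) - g (clampr a b x)" for x
  have "mono V"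
    unfolding mono_def V_def using bvar_mono(1)[OF M] clampr_in[OF assms(2)] clampr_mono[OF assms(2)] by meson
  moreover have "mono W"
    unfolding mono_def W_def using bvar_mono(2)[OF M] clampr_in[OF assms(2)] clampr_mono[OF assms(2)] by meson
  ultimately have "(\<lambda>x. V x - W x) \<in> borel_measurable borel"
    using borel_measurable_mono by measurable
  moreover have "(\<lambda>x. V x - W x) = (\<lambda>x. g (clampr a b x))" by (auto simp: V_def W_def)
  ultimately show ?thesis by simp
qed

lemma bv_measurable_on:
  assumes "bounded_var g a b" "a \<le> b"
  shows "g \<in> borel_measurable (lebesgue_on {a..b})"
proof -
  have "(\<lambda>x. g (clampr a b x)) \<in> borel_measurable (lebesgue_on {a..b})"
    using bv_clamp_measurable[OF assms] by (intro measurable_restrict_space1 measurable_completion) simp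
  then show ?thesis
    by (rule measurable_cong[THEN iffD1, rotated]) (simp add: clampr_id)
qed

lemma bv_indicator_measurable:
  assumes "bounded_var g a b" "a \<le> b"
  shows "(\<lambda>x. indicator {a..b} x * g x) \<in> borel_measurable borel"
proof -
  have "(\<lambda>x. indicator {a..b} x * g (clampr a b x)) \<in> borel_measurable borel"
    using bv_clamp_measurable[OF assms] by measurable
  moreover have "(\<lambda>x. indicator {a..b} x * g (clampr a b x)) = (\<lambda>x. indicator {a..b} x * g x)"
    by (auto simp: clampr_id indicator_def)
  ultimately show ?thesis by simp
qed

lemma bv_bounded_image: assumes "bounded_var g a b" shows "bounded (g ` {a..b})"
proof -
  obtain M where M: "bv_le g a b M" using assms(1) bounded_var_bv_le by blast
  show ?thesis unfolding bounded_iff using bv_bounded[OF M] by fastforce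
qed



lemma RS_indef_bv:
  fixes \<phi> P h :: "real \<Rightarrow> real"
  assumes ab: "a \<le> b" and bv: "bounded_var \<phi> a b" and hi: "h absolutely_integrable_on {a..b}"
    and hb: "\<And>t. t \<in> {a..b} \<Longrightarrow> \<bar>h t\<bar> \<le> H"
    and Ph: "\<And>s t. a \<le> s \<Longrightarrow> s \<le> t \<Longrightarrow> t \<le> b \<Longrightarrow> P t - P s = integral {s..t} h"
  shows "has_RS_integral \<phi> P a b (integral {a..b} (\<lambda>t. \<phi> t * h t))"
  unfolding has_RS_fine
proof (intro allI impI)
  fix \<epsilon> :: real assume e: "\<epsilon> > 0"
  obtain M where M: "bv_le \<phi> a b M" using bv bounded_var_bv_le by blast
  have M0: "M \<ge> 0" using bv_le_nonneg[OF M ab] .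
  have H0: "H \<ge> 0" using hb[of a] ab by auto
  define V where "V = bvar \<phi> a"
  define \<delta> where "\<delta> = \<epsilon> / (H * M + 1)"
  have HM: "H * M \<ge> 0" using H0 M0 by simp
  have d: "\<delta> > 0" using e HM by (simp add: \<delta>_def)
  have dHM: "H * \<delta> * M < \<epsilon>"
  proof -
    have "H * \<delta> * M = \<epsilon> * ((H*M) / (H * M + 1))" by (simp add: \<delta>_def)
    also have "\<dots> < \<epsilon> * 1" using e HM by (intro mult_strict_left_mono) auto
    finally show ?thesis by simp
  qed
  have \<phi>h: "(\<lambda>t. \<phi> t * h t) absolutely_integrable_on {a..b}"
    by (rule absolutely_integrable_bounded_measurable_product_real[OF bv_measurable_on[OF bv ab] _ bv_bounded_image[OF bv] hi]) simp
  show "\<exists>\<delta>>0. \<forall>m x \<xi>. rsfine a b \<delta> m x \<xi> \<longrightarrow> \<bar>rs_sum \<phi> P m x \<xi> - integral {a..b} (\<lambda>t. \<phi> t * h t)\<bar> < \<epsilon>"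
  proof (intro exI[of _ \<delta>] conjI allI impI)
    show "\<delta> > 0" by fact
    fix m x \<xi> assume f: "rsfine a b \<delta> m x \<xi>"
    have Pt: "is_partition a b m x" using f by (simp add: rsfine_def)
    have xr: "\<And>i. i \<le> m \<Longrightarrow> a \<le> x i \<and> x i \<le> b" using partition_range[OF Pt] by blast
    have sub: "{x i..x (Suc i)} \<subseteq> {a..b}" if "i < m" for i using xr[of i] xr[of "Suc i"] that by auto
    have hsub: "h integrable_on {x i..x (Suc i)}" if i: "i < m" for i
      by (rule integrable_on_subinterval[OF set_lebesgue_integral_eq_integral(1)[OF hi] sub[OF i]])
    have \<phi>hsub: "(\<lambda>t. \<phi> t * h t) integrable_on {x i..x (Suc i)}" if i: "i < m" for i
      by (rule integrable_on_subinterval[OF set_lebesgue_integral_eq_integral(1)[OF \<phi>h] sub[OF i]])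
    have "rs_sum \<phi> P m x \<xi> - integral {a..b} (\<lambda>t. \<phi> t * h t)
        = (\<Sum>i<m. integral {x i..x (Suc i)} (\<lambda>t. (\<phi> (\<xi> i) - \<phi> t) * h t))"
    proof -
      have "rs_sum \<phi> P m x \<xi> = (\<Sum>i<m. integral {x i..x (Suc i)} (\<lambda>t. \<phi> (\<xi> i) * h t))"
        unfolding rs_sum_def
      proof (rule sum.cong[OF refl])
        fix i assume "i \<in> {..<m}"
        then have i: "i < m" by simp
        have "x i \<le> x (Suc i)" using Pt i by (simp add: is_partition_def)
        then have "P (x (Suc i)) - P (x i) = integral {x i..x (Suc i)} h"
          using Ph xr i by simp
        then show "\<phi> (\<xi> i) * (P (x (Suc i)) - P (x i)) = integral {x i..x (Suc i)} (\<lambda>t. \<phi> (\<xi> i) * h t)"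
          by simp
      qed
      moreover have "integral {a..b} (\<lambda>t. \<phi> t * h t) = (\<Sum>i<m. integral {x i..x (Suc i)} (\<lambda>t. \<phi> t * h t))"
        using partition_integral_sum[OF Pt set_lebesgue_integral_eq_integral(1)[OF \<phi>h]] by simp
      ultimately have "rs_sum \<phi> P m x \<xi> - integral {a..b} (\<lambda>t. \<phi> t * h t) =
          (\<Sum>i<m. integral {x i..x (Suc i)} (\<lambda>t. \<phi> (\<xi> i) * h t) - integral {x i..x (Suc i)} (\<lambda>t. \<phi> t * h t))"
        by (simp add: sum_subtractf)
      also have "\<dots> = (\<Sum>i<m. integral {x i..x (Suc i)} (\<lambda>t. (\<phi> (\<xi> i) - \<phi> t) * h t))"
      proof (rule sum.cong[OF refl])
        fix i assume "i \<in> {..<m}"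
        then have i: "i < m" by simp
        have "integral {x i..x (Suc i)} (\<lambda>t. \<phi> (\<xi> i) * h t - \<phi> t * h t) =
              integral {x i..x (Suc i)} (\<lambda>t. \<phi> (\<xi> i) * h t) - integral {x i..x (Suc i)} (\<lambda>t. \<phi> t * h t)"
          by (rule Henstock_Kurzweil_Integration.integral_diff[OF integrable_on_mult_right[OF hsub[OF i]] \<phi>hsub[OF i]])
        then show "integral {x i..x (Suc i)} (\<lambda>t. \<phi> (\<xi> i) * h t) - integral {x i..x (Suc i)} (\<lambda>t. \<phi> t * h t) =
           integral {x i..x (Suc i)} (\<lambda>t. (\<phi> (\<xi> i) - \<phi> t) * h t)"
          by (simp add: algebra_simps)
      qed
      finally show ?thesis .
    qed
    also have "\<bar>\<dots>\<bar> \<le> (\<Sum>i<m. \<bar>integral {x i..x (Suc i)} (\<lambda>t. (\<phi> (\<xi> i) - \<phi> t) * h t)\<bar>)"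
      by (rule sum_abs)
    also have "\<dots> \<le> (\<Sum>i<m. H * \<delta> * (V (x (Suc i)) - V (x i)))"
    proof (rule sum_mono)
      fix i assume "i \<in> {..<m}"
      then have i: "i < m" by simp
      have xi: "x i \<le> x (Suc i)" using Pt i by (simp add: is_partition_def)
      have xia: "a \<le> x i" "x (Suc i) \<le> b" using xr[of i] xr[of "Suc i"] i by auto
      have int1: "(\<lambda>t. (\<phi> (\<xi> i) - \<phi> t) * h t) integrable_on {x i..x (Suc i)}"
      proof -
        have "(\<lambda>t. \<phi> (\<xi> i) * h t - \<phi> t * h t) integrable_on {x i..x (Suc i)}"
          by (rule integrable_diff[OF integrable_on_mult_right[OF hsub[OF i]] \<phi>hsub[OF i]])
        then show ?thesis by (simp add: algebra_simps)
      qed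
      have "norm (integral {x i..x (Suc i)} (\<lambda>t. (\<phi> (\<xi> i) - \<phi> t) * h t)) \<le> integral {x i..x (Suc i)} (\<lambda>t. H * (V (x (Suc i)) - V (x i)))"
      proof (rule Henstock_Kurzweil_Integration.integral_norm_bound_integral[OF int1])
        show "(\<lambda>t. H * (V (x (Suc i)) - V (x i))) integrable_on {x i..x (Suc i)}" by (rule integrable_const_ivl)
        fix t assume t: "t \<in> {x i..x (Suc i)}"
        have xit: "\<xi> i \<in> {x i..x (Suc i)}" using f i by (simp add: rsfine_def)
        have osc: "\<bar>\<phi> u - \<phi> v\<bar> \<le> V (x (Suc i)) - V (x i)" if "u \<in> {x i..x (Suc i)}" "v \<in> {x i..x (Suc i)}" for u v
        proof -
          have "\<bar>\<phi> u - \<phi> v\<bar> \<le> \<bar>V u - V v\<bar>"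
          proof (cases "u \<le> v")
            case True
            then show ?thesis using bvar_osc[OF M, of u v] that xia unfolding V_def by auto
          next
            case False
            then show ?thesis using bvar_osc[OF M, of v u] that xia unfolding V_def by auto
          qed
          also have "\<dots> \<le> V (x (Suc i)) - V (x i)"
            using bvar_mono(1)[OF M, of "x i" u] bvar_mono(1)[OF M, of u "x (Suc i)"]
               bvar_mono(1)[OF M, of "x i" v] bvar_mono(1)[OF M, of v "x (Suc i)"] that xia
            unfolding V_def by auto
          finally show ?thesis .
        qed
        have "\<bar>h t\<bar> \<le> H" using hb sub[OF i] t by auto
        moreover have "\<bar>\<phi> (\<xi> i) - \<phi> t\<bar> \<le> V (x (Suc i)) - V (x i)" using osc[OF xit t] .
        ultimately have "\<bar>\<phi> (\<xi> i) - \<phi> t\<bar> * \<bar>h t\<bar> \<le> (V (x (Suc i)) - V (x i)) * H"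
          by (intro mult_mono) auto
        then show "norm ((\<phi> (\<xi> i) - \<phi> t) * h t) \<le> H * (V (x (Suc i)) - V (x i))"
          by (simp only: real_norm_def abs_mult mult.commute)
      qed
      also have "\<dots> = (x (Suc i) - x i) * (H * (V (x (Suc i)) - V (x i)))"
        using xi by simp
      also have "\<dots> \<le> \<delta> * (H * (V (x (Suc i)) - V (x i)))"
      proof (rule mult_right_mono)
        show "x (Suc i) - x i \<le> \<delta>" using f i by (auto simp: rsfine_def)
        have "V (x i) \<le> V (x (Suc i))" using bvar_mono(1)[OF M xia(1) xi xia(2)] unfolding V_def .
        then show "0 \<le> H * (V (x (Suc i)) - V (x i))" using H0 by simp
      qed
      finally show "\<bar>integral {x i..x (Suc i)} (\<lambda>t. (\<phi> (\<xi> i) - \<phi> t) * h t)\<bar> \<le> H * \<delta> * (V (x (Suc i)) - V (x i))"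
        by (simp add: algebra_simps)
    qed
    also have "\<dots> = H * \<delta> * (V b - V a)"
      using partition_telescope[OF Pt, of V] by (simp add: sum_distrib_left[symmetric])
    also have "\<dots> \<le> H * \<delta> * M"
    proof (rule mult_left_mono)
      show "V b - V a \<le> M" using bvar_le[OF M ab order_refl] bvar_nonneg[OF M order_refl ab] unfolding V_def by linarith
      show "0 \<le> H * \<delta>" using H0 d by simp
    qed
    finally show "\<bar>rs_sum \<phi> P m x \<xi> - integral {a..b} (\<lambda>t. \<phi> t * h t)\<bar> < \<epsilon>" using dHM by linarith
  qed
qed



lemma abel_identity:
  fixes X Y :: "nat \<Rightarrow> real"
  shows "(\<Sum>j<Suc m. X j * (Y (Suc j) - Y j)) + (\<Sum>i<m. Y (Suc i) * (X (Suc i) - X i)) = X m * Y (Suc m) - X 0 * Y 0"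
  by (induction m) (simp_all add: algebra_simps)

lemma RS_ibp:
  fixes F g :: "real \<Rightarrow> real"
  assumes ab: "a \<le> b" and I: "has_RS_integral F g a b I"
  shows "has_RS_integral g F a b (F b * g b - F a * g a - I)"
  unfolding has_RS_fine
proof (intro allI impI)
  fix \<epsilon> :: real assume e: "\<epsilon> > 0"
  obtain \<delta> where d: "\<delta> > 0" "\<And>m x \<xi>. rsfine a b \<delta> m x \<xi> \<Longrightarrow> \<bar>rs_sum F g m x \<xi> - I\<bar> < \<epsilon>"
    using I e unfolding has_RS_fine by blast
  show "\<exists>\<delta>>0. \<forall>m x \<xi>. rsfine a b \<delta> m x \<xi> \<longrightarrow> \<bar>rs_sum g F m x \<xi> - (F b * g b - F a * g a - I)\<bar> < \<epsilon>"
  proof (intro exI[of _ "\<delta>/2"] conjI allI impI)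
    show "\<delta>/2 > 0" using d by simp
    fix m x \<xi> assume f: "rsfine a b (\<delta>/2) m x \<xi>"
    have Pt: "is_partition a b m x" using f by (simp add: rsfine_def)
    define y where "y j = (if j = 0 then a else if j \<le> m then \<xi> (j - 1) else b)" for j
    have y0: "y 0 = a" by (simp add: y_def)
    have ym: "y (Suc m) = b" by (simp add: y_def)
    have ys: "y (Suc i) = \<xi> i" if "i < m" for i using that by (simp add: y_def)
    have x0: "x 0 = a" and xm: "x m = b" using Pt by (auto simp: is_partition_def)
    have fy: "rsfine a b \<delta> (Suc m) y x"
      unfolding rsfine_def is_partition_def
    proof (intro conjI allI impI)
      show "y 0 = a" "y (Suc m) = b" by (fact y0, fact ym)
    next
      fix j assume j: "j < Suc m"
      have A: "y j \<le> x j \<and> x j \<le> y (Suc j) \<and> y (Suc j) - y j < \<delta>"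
      proof (cases "j = 0")
        case True
        show ?thesis
        proof (cases "m = 0")
          case True
          then show ?thesis using \<open>j = 0\<close> x0 xm d ab by (simp add: y_def)
        next
          case False
          then have "x 0 \<le> \<xi> 0" "\<xi> 0 \<le> x 1" "x 1 - x 0 < \<delta>/2" using f by (auto simp: rsfine_def)
          then show ?thesis using \<open>j = 0\<close> False x0 by (simp add: y_def)
        qed
      next
        case False
        then obtain k where k: "j = Suc k" by (cases j) auto
        have km: "k < m" using j k by simp
        have B: "x k \<le> \<xi> k" "\<xi> k \<le> x (Suc k)" "x (Suc k) - x k < \<delta>/2" using f km by (auto simp: rsfine_def)
        show ?thesis
        proof (cases "Suc k < m")
          case True
          have C: "x (Suc k) \<le> \<xi> (Suc k)" "\<xi> (Suc k) \<le> x (Suc (Suc k))" "x (Suc (Suc k)) - x (Suc k) < \<delta>/2"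
            using f True by (auto simp: rsfine_def)
          have "y j = \<xi> k" "y (Suc j) = \<xi> (Suc k)" using k km True by (auto simp: y_def)
          then show ?thesis using B C k by auto
        next
          case False
          then have "Suc k = m" using km by simp
          then have "y j = \<xi> k" "y (Suc j) = b" using k km by (auto simp: y_def)
          then show ?thesis using B k \<open>Suc k = m\<close> xm d by auto
        qed
      qed
      show "y j \<le> y (Suc j)" using A by linarith
      show "y j \<le> x j" "x j \<le> y (Suc j)" "y (Suc j) - y j < \<delta>" using A by auto
    qed
    have "rs_sum F g (Suc m) y x + rs_sum g F m x \<xi> = F b * g b - F a * g a"
    proof -
      have "rs_sum g F m x \<xi> = (\<Sum>i<m. g (y (Suc i)) * (F (x (Suc i)) - F (x i)))"
        unfolding rs_sum_def by (rule sum.cong) (auto simp: ys)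
      then show ?thesis
        using abel_identity[of "\<lambda>j. F (x j)" "\<lambda>j. g (y j)" m] unfolding rs_sum_def
        by (simp add: y0 ym x0 xm)
    qed
    moreover have "\<bar>rs_sum F g (Suc m) y x - I\<bar> < \<epsilon>" using d(2)[OF fy] .
    ultimately show "\<bar>rs_sum g F m x \<xi> - (F b * g b - F a * g a - I)\<bar> < \<epsilon>"
      by (simp add: abs_minus_commute algebra_simps)
  qed
qed

lemma rs_sum_diff: "rs_sum F g m x \<xi> - rs_sum G g m x \<xi> = rs_sum (\<lambda>t. F t - G t) g m x \<xi>"
  unfolding rs_sum_def sum_subtractf[symmetric] by (rule sum.cong) (auto simp: left_diff_distrib)

lemma rs_sum_bound:
  assumes f: "rsfine a b \<delta> m x \<xi>" and M: "bv_le g a b M" and B: "\<And>t. t \<in> {a..b} \<Longrightarrow> \<bar>F t\<bar> \<le> B"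
  shows "\<bar>rs_sum F g m x \<xi>\<bar> \<le> B * M"
proof -
  have Pt: "is_partition a b m x" using f by (simp add: rsfine_def)
  have ab: "a \<le> b" using partition_le[OF Pt] .
  have B0: "B \<ge> 0" using B[of a] ab by auto
  have xr: "\<And>i. i \<le> m \<Longrightarrow> a \<le> x i \<and> x i \<le> b" using partition_range[OF Pt] by blast
  have "\<bar>rs_sum F g m x \<xi>\<bar> \<le> (\<Sum>i<m. \<bar>F (\<xi> i) * (g (x (Suc i)) - g (x i))\<bar>)"
    unfolding rs_sum_def by (rule sum_abs)
  also have "\<dots> \<le> (\<Sum>i<m. B * \<bar>g (x (Suc i)) - g (x i)\<bar>)"
  proof (rule sum_mono)
    fix i assume "i \<in> {..<m}"
    then have i: "i < m" by simp
    have "\<xi> i \<in> {a..b}" using f i xr[of i] xr[of "Suc i"] by (auto simp: rsfine_def)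
    then have "\<bar>F (\<xi> i)\<bar> \<le> B" using B by blast
    then show "\<bar>F (\<xi> i) * (g (x (Suc i)) - g (x i))\<bar> \<le> B * \<bar>g (x (Suc i)) - g (x i)\<bar>"
      by (simp add: abs_mult mult_right_mono)
  qed
  also have "\<dots> = B * vsum g m x" by (simp add: vsum_def sum_distrib_left)
  also have "\<dots> \<le> B * M" using M Pt B0 unfolding bv_le_def by (simp add: mult_left_mono)
  finally show ?thesis .
qed

lemma RS_diff_bound:
  assumes ab: "a \<le> b" and I: "has_RS_integral F g a b I" and J: "has_RS_integral G g a b J"
    and M: "bv_le g a b M" and B: "\<And>t. t \<in> {a..b} \<Longrightarrow> \<bar>F t - G t\<bar> \<le> B"
  shows "\<bar>I - J\<bar> \<le> B * M"
proof (rule field_le_epsilon)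
  fix \<epsilon> :: real assume e: "\<epsilon> > 0"
  then have e2: "\<epsilon>/2 > 0" by simp
  obtain d1 where d1: "d1 > 0" "\<And>m x \<xi>. rsfine a b d1 m x \<xi> \<Longrightarrow> \<bar>rs_sum F g m x \<xi> - I\<bar> < \<epsilon>/2"
    using I e2 unfolding has_RS_fine by blast
  obtain d2 where d2: "d2 > 0" "\<And>m x \<xi>. rsfine a b d2 m x \<xi> \<Longrightarrow> \<bar>rs_sum G g m x \<xi> - J\<bar> < \<epsilon>/2"
    using J e2 unfolding has_RS_fine by blast
  obtain m x \<xi> where f: "rsfine a b (min d1 d2) m x \<xi>" using rsfine_exists[OF ab, of "min d1 d2"] d1 d2 by auto
  have "rsfine a b d1 m x \<xi>" "rsfine a b d2 m x \<xi>" using f by (auto simp: rsfine_def)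
  then have 1: "\<bar>rs_sum F g m x \<xi> - I\<bar> < \<epsilon>/2" "\<bar>rs_sum G g m x \<xi> - J\<bar> < \<epsilon>/2" using d1 d2 by auto
  have 2: "\<bar>rs_sum (\<lambda>t. F t - G t) g m x \<xi>\<bar> \<le> B * M" using rs_sum_bound[OF f M B] by simp
  have "rs_sum (\<lambda>t. F t - G t) g m x \<xi> = rs_sum F g m x \<xi> - rs_sum G g m x \<xi>" using rs_sum_diff by metis
  then show "\<bar>I - J\<bar> \<le> B * M + \<epsilon>" using 1 2 by (simp add: abs_if split: if_splits)
qed

lemma mono_bv: assumes "\<And>s t. a \<le> s \<Longrightarrow> s \<le> t \<Longrightarrow> t \<le> b \<Longrightarrow> g s \<le> g t"
  shows "bv_le g a b (g b - g a)"
  unfolding bv_le_def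
proof (intro allI impI)
  fix m x assume Pt: "is_partition a b m x"
  have xr: "\<And>i. i \<le> m \<Longrightarrow> a \<le> x i \<and> x i \<le> b" using partition_range[OF Pt] by blast
  have "vsum g m x = (\<Sum>i<m. g (x (Suc i)) - g (x i))"
    unfolding vsum_def
  proof (rule sum.cong[OF refl])
    fix i assume "i \<in> {..<m}"
    then have i: "i < m" by simp
    have "g (x i) \<le> g (x (Suc i))" using assms xr[of i] xr[of "Suc i"] i Pt by (auto simp: is_partition_def)
    then show "\<bar>g (x (Suc i)) - g (x i)\<bar> = g (x (Suc i)) - g (x i)" by simp
  qed
  also have "\<dots> = g b - g a" by (rule partition_telescope[OF Pt])
  finally show "vsum g m x \<le> g b - g a" by simp
qed

lemma bv_le_lincomb:
  assumes "bv_le f a b M1" "bv_le g a b M2"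
  shows "bv_le (\<lambda>t. c1 * f t + c2 * g t) a b (\<bar>c1\<bar> * M1 + \<bar>c2\<bar> * M2)"
  unfolding bv_le_def
proof (intro allI impI)
  fix m x assume Pt: "is_partition a b m x"
  have "vsum (\<lambda>t. c1 * f t + c2 * g t) m x \<le> (\<Sum>i<m. \<bar>c1\<bar> * \<bar>f (x (Suc i)) - f (x i)\<bar> + \<bar>c2\<bar> * \<bar>g (x (Suc i)) - g (x i)\<bar>)"
    unfolding vsum_def
  proof (rule sum_mono)
    fix i
    have "c1 * f (x (Suc i)) + c2 * g (x (Suc i)) - (c1 * f (x i) + c2 * g (x i)) =
          c1 * (f (x (Suc i)) - f (x i)) + c2 * (g (x (Suc i)) - g (x i))" by (simp add: algebra_simps)
    then show "\<bar>c1 * f (x (Suc i)) + c2 * g (x (Suc i)) - (c1 * f (x i) + c2 * g (x i))\<bar>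
      \<le> \<bar>c1\<bar> * \<bar>f (x (Suc i)) - f (x i)\<bar> + \<bar>c2\<bar> * \<bar>g (x (Suc i)) - g (x i)\<bar>"
      by (metis abs_mult abs_triangle_ineq)
  qed
  also have "\<dots> = \<bar>c1\<bar> * vsum f m x + \<bar>c2\<bar> * vsum g m x"
    by (simp add: vsum_def sum.distrib sum_distrib_left)
  also have "\<dots> \<le> \<bar>c1\<bar> * M1 + \<bar>c2\<bar> * M2"
    using assms Pt unfolding bv_le_def by (intro add_mono mult_left_mono) auto
  finally show "vsum (\<lambda>t. c1 * f t + c2 * g t) m x \<le> \<bar>c1\<bar> * M1 + \<bar>c2\<bar> * M2" .
qed

lemma bounded_var_lincomb:
  "bounded_var f a b \<Longrightarrow> bounded_var g a b \<Longrightarrow> bounded_var (\<lambda>t. c1 * f t + c2 * g t) a b"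
  using bv_le_lincomb bounded_var_bv_le by metis

lemma bv_le_cong: "bv_le f a b M \<Longrightarrow> (\<And>t. t \<in> {a..b} \<Longrightarrow> f t = g t) \<Longrightarrow> bv_le g a b M"
  unfolding bv_le_def vsum_def
proof (intro allI impI)
  fix m x assume A: "\<forall>m x. is_partition a b m x \<longrightarrow> (\<Sum>i<m. \<bar>f (x (Suc i)) - f (x i)\<bar>) \<le> M"
    and fg: "\<And>t. t \<in> {a..b} \<Longrightarrow> f t = g t" and Pt: "is_partition a b m x"
  have "(\<Sum>i<m. \<bar>g (x (Suc i)) - g (x i)\<bar>) = (\<Sum>i<m. \<bar>f (x (Suc i)) - f (x i)\<bar>)"
    using partition_range[OF Pt] fg by (intro sum.cong) auto
  then show "(\<Sum>i<m. \<bar>g (x (Suc i)) - g (x i)\<bar>) \<le> M" using A Pt by simp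
qed



lemma poly_deriv_facts:
  assumes "real_polynomial_function p"
  obtains p' where "real_polynomial_function p'" "continuous_on UNIV p'"
    "\<And>x. (p has_real_derivative p' x) (at x)"
    "\<And>s t. s \<le> t \<Longrightarrow> p t - p s = integral {s..t} p'"
proof -
  obtain p' where p': "real_polynomial_function p'" "\<And>x. (p has_real_derivative p' x) (at x)"
    using has_real_derivative_polynomial_function[OF assms] by blast
  have c: "continuous_on UNIV p'" using p'(1) continuous_on_polymonial_function real_polynomial_function_eq by blast
  have "p t - p s = integral {s..t} p'" if "s \<le> t" for s t
  proof -
    have "(p' has_integral p t - p s) {s..t}"
      by (rule fundamental_theorem_of_calculus[OF that])
         (use p'(2) in \<open>auto simp: has_real_derivative_iff_has_vector_derivative[symmetric] intro: has_field_derivative_at_within\<close>)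
    then show ?thesis by (simp add: integral_unique)
  qed
  then show ?thesis using that p' c by blast
qed

lemma poly_RS_exists:
  assumes ab: "a \<le> b" and p: "real_polynomial_function p" and bv: "bounded_var g a b"
  shows "\<exists>I. has_RS_integral p g a b I"
proof -
  obtain p' where p': "continuous_on UNIV p'" "\<And>s t. s \<le> t \<Longrightarrow> p t - p s = integral {s..t} p'"
    using poly_deriv_facts[OF p] by metis
  have pc: "continuous_on {a..b} p'" using p' continuous_on_subset by blast
  obtain H where H: "\<And>t. t \<in> {a..b} \<Longrightarrow> \<bar>p' t\<bar> \<le> H"
  proof -
    have "bounded (p' ` {a..b})" using pc compact_continuous_image compact_imp_bounded by blast
    then show ?thesis using that unfolding bounded_iff by fastforce
  qed
  have "has_RS_integral g p a b (integral {a..b} (\<lambda>t. g t * p' t))"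
    by (rule RS_indef_bv[OF ab bv absolutely_integrable_continuous_real[OF pc] H p'(2)]) auto
  from RS_ibp[OF ab this] show ?thesis by blast
qed

lemma poly_approx_seq:
  fixes F :: "real \<Rightarrow> real" and a b :: real
  assumes "continuous_on {a..b} F"
  obtains p where "\<And>k. real_polynomial_function (p k)" "\<And>k x. x \<in> {a..b} \<Longrightarrow> \<bar>F x - p k x\<bar> < 1 / Suc k"
proof -
  have "\<forall>k. \<exists>q. real_polynomial_function q \<and> (\<forall>x\<in>{a..b}. \<bar>F x - q x\<bar> < 1 / Suc k)"
  proof
    fix k
    obtain q where q: "real_polynomial_function q" "\<And>x. x \<in> {a..b} \<Longrightarrow> \<bar>F x - q x\<bar> < 1 / Suc k"
      by (rule Stone_Weierstrass_real_polynomial_function[of "{a..b}" F "1 / Suc k"]) (use assms in auto)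
    then show "\<exists>q. real_polynomial_function q \<and> (\<forall>x\<in>{a..b}. \<bar>F x - q x\<bar> < 1 / Suc k)" by blast
  qed
  then obtain p where "\<forall>k. real_polynomial_function (p k) \<and> (\<forall>x\<in>{a..b}. \<bar>F x - p k x\<bar> < 1 / Suc k)"
    by metis
  then show ?thesis using that by blast
qed

lemma inv_Suc_small: "(\<epsilon>::real) > 0 \<Longrightarrow> \<exists>N. \<forall>k\<ge>N. C / Suc k < \<epsilon>"
proof -
  assume e: "\<epsilon> > 0"
  obtain N :: nat where N: "\<bar>C\<bar> / \<epsilon> < N" using reals_Archimedean2 by blast
  have "C / Suc k < \<epsilon>" if "k \<ge> N" for k
  proof -
    have "\<bar>C\<bar> < \<epsilon> * N" using N e by (simp add: field_simps)
    also have "\<dots> \<le> \<epsilon> * Suc k" using that e by (intro mult_left_mono) auto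
    finally have "C < \<epsilon> * Suc k" by linarith
    then show ?thesis by (simp add: field_simps)
  qed
  then show ?thesis by blast
qed

lemma RS_exists:
  assumes ab: "a \<le> b" and Fc: "continuous_on {a..b} F" and bv: "bounded_var g a b"
  shows "\<exists>I. has_RS_integral F g a b I"
proof -
  obtain M where M: "bv_le g a b M" using bv bounded_var_bv_le by blast
  have M0: "M \<ge> 0" using bv_le_nonneg[OF M ab] .
  obtain p where p: "\<And>k. real_polynomial_function (p k)" "\<And>k x. x \<in> {a..b} \<Longrightarrow> \<bar>F x - p k x\<bar> < 1 / Suc k"
    using poly_approx_seq[OF Fc] by metis
  have "\<forall>k. \<exists>I. has_RS_integral (p k) g a b I" using poly_RS_exists[OF ab p(1) bv] by blast
  then obtain J where J: "\<And>k. has_RS_integral (p k) g a b (J k)" by metis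
  have Jd: "\<bar>J k - J l\<bar> \<le> (1 / Suc k + 1 / Suc l) * M" for k l
  proof (rule RS_diff_bound[OF ab J J M])
    fix t assume t: "t \<in> {a..b}"
    have "\<bar>p k t - p l t\<bar> \<le> \<bar>F t - p k t\<bar> + \<bar>F t - p l t\<bar>" by linarith
    then show "\<bar>p k t - p l t\<bar> \<le> 1 / Suc k + 1 / Suc l" using p(2)[OF t, of k] p(2)[OF t, of l] by linarith
  qed
  have "Cauchy J"
  proof (rule metric_CauchyI)
    fix e :: real assume e: "e > 0"
    obtain N where N: "\<And>k. k \<ge> N \<Longrightarrow> M / Suc k < e / 2" using inv_Suc_small[of "e/2" M] e by auto
    have "dist (J k) (J l) < e" if "k \<ge> N" "l \<ge> N" for k l
    proof -
      have "dist (J k) (J l) \<le> M / Suc k + M / Suc l" using Jd[of k l] by (simp add: dist_real_def algebra_simps)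
      also have "\<dots> < e" using N[OF that(1)] N[OF that(2)] by linarith
      finally show ?thesis .
    qed
    then show "\<exists>N. \<forall>k\<ge>N. \<forall>l\<ge>N. dist (J k) (J l) < e" by blast
  qed
  then obtain I where I: "J \<longlonglongrightarrow> I" using Cauchy_convergent_iff convergent_def by blast
  have "has_RS_integral F g a b I"
    unfolding has_RS_fine
  proof (intro allI impI)
    fix \<epsilon> :: real assume e: "\<epsilon> > 0"
    then have e3: "\<epsilon>/3 > 0" by simp
    obtain N1 where N1: "\<And>k. k \<ge> N1 \<Longrightarrow> M / Suc k < \<epsilon>/3" using inv_Suc_small[OF e3, of M] by auto
    obtain N2 where N2: "\<And>k. k \<ge> N2 \<Longrightarrow> dist (J k) I < \<epsilon>/3"
      using I e3 unfolding lim_sequentially by blast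
    define k where "k = max N1 N2"
    have k1: "M / Suc k < \<epsilon>/3" using N1 by (simp add: k_def)
    have k2: "\<bar>J k - I\<bar> < \<epsilon>/3" using N2[of k] by (simp add: k_def dist_real_def)
    obtain \<delta> where d: "\<delta> > 0" "\<And>m x \<xi>. rsfine a b \<delta> m x \<xi> \<Longrightarrow> \<bar>rs_sum (p k) g m x \<xi> - J k\<bar> < \<epsilon>/3"
      using J[of k] e3 unfolding has_RS_fine by blast
    show "\<exists>\<delta>>0. \<forall>m x \<xi>. rsfine a b \<delta> m x \<xi> \<longrightarrow> \<bar>rs_sum F g m x \<xi> - I\<bar> < \<epsilon>"
    proof (intro exI[of _ \<delta>] conjI allI impI)
      show "\<delta> > 0" by fact
      fix m x \<xi> assume f: "rsfine a b \<delta> m x \<xi>"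
      have "\<bar>rs_sum (\<lambda>t. F t - p k t) g m x \<xi>\<bar> \<le> (1 / Suc k) * M"
        by (rule rs_sum_bound[OF f M]) (use p(2) in \<open>auto intro: less_imp_le\<close>)
      then have "\<bar>rs_sum F g m x \<xi> - rs_sum (p k) g m x \<xi>\<bar> \<le> M / Suc k"
        using rs_sum_diff[of F g m x \<xi> "p k"] by simp
      then show "\<bar>rs_sum F g m x \<xi> - I\<bar> < \<epsilon>" using d(2)[OF f] k1 k2 by linarith
    qed
  qed
  then show ?thesis by blast
qed



lemma kernel_right_has_integral:
  fixes c d e :: real assumes cd: "c \<le> d" and e: "e > -1"
  shows "((\<lambda>x. (x - c) powr e) has_integral (d - c) powr (e+1) / (e+1)) {c..d}"
proof -
  define G where "G x = (x - c) powr (e+1) / (e+1)" for x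
  have "((\<lambda>x. (x - c) powr e) has_integral (G d - G c)) {c..d}"
  proof (rule fundamental_theorem_of_calculus_interior[OF cd])
    show "continuous_on {c..d} G"
      unfolding G_def using e by (intro continuous_intros continuous_on_powr') auto
    fix x assume x: "x \<in> {c<..<d}"
    have "((\<lambda>z. z powr (e+1)) has_real_derivative (e+1) * (x - c) powr (e + 1 - 1)) (at (x - c))"
      using x by (intro has_real_derivative_powr) auto
    moreover have "((\<lambda>x. x - c) has_real_derivative 1) (at x)" by (auto intro!: derivative_eq_intros)
    ultimately have "((\<lambda>x. (x - c) powr (e+1)) has_real_derivative (e+1) * (x - c) powr (e + 1 - 1) * 1) (at x)"
      by (rule DERIV_chain2[where f="\<lambda>z. z powr (e+1)" and g="\<lambda>x. x - c"])
    then have "((\<lambda>x. (x - c) powr (e+1)) has_real_derivative (e+1) * (x - c) powr e) (at x)" by simp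
    from DERIV_cdivide[OF this, of "e+1"]
    have "(G has_real_derivative (x - c) powr e) (at x)" using e unfolding G_def by simp
    then show "(G has_vector_derivative (x - c) powr e) (at x)"
      by (simp add: has_real_derivative_iff_has_vector_derivative)
  qed
  then show ?thesis by (simp add: G_def)
qed

lemma kernel_left_has_integral:
  fixes c d e :: real assumes cd: "c \<le> d" and e: "e > -1"
  shows "((\<lambda>x. (d - x) powr e) has_integral (d - c) powr (e+1) / (e+1)) {c..d}"
proof -
  define G where "G x = - ((d - x) powr (e+1) / (e+1))" for x
  have "((\<lambda>x. (d - x) powr e) has_integral (G d - G c)) {c..d}"
  proof (rule fundamental_theorem_of_calculus_interior[OF cd])
    show "continuous_on {c..d} G"
      unfolding G_def using e by (intro continuous_intros continuous_on_powr') auto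
    fix x assume x: "x \<in> {c<..<d}"
    have "((\<lambda>z. z powr (e+1)) has_real_derivative (e+1) * (d - x) powr (e + 1 - 1)) (at (d - x))"
      using x by (intro has_real_derivative_powr) auto
    moreover have "((\<lambda>x. d - x) has_real_derivative -1) (at x)" by (auto intro!: derivative_eq_intros)
    ultimately have "((\<lambda>x. (d - x) powr (e+1)) has_real_derivative (e+1) * (d - x) powr (e + 1 - 1) * -1) (at x)"
      by (rule DERIV_chain2[where f="\<lambda>z. z powr (e+1)" and g="\<lambda>x. d - x"])
    then have "((\<lambda>x. (d - x) powr (e+1)) has_real_derivative - ((e+1) * (d - x) powr e)) (at x)" by simp
    from DERIV_minus[OF DERIV_cdivide[OF this, of "e+1"]]
    have "(G has_real_derivative (d - x) powr e) (at x)" using e unfolding G_def by simp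
    then show "(G has_vector_derivative (d - x) powr e) (at x)"
      by (simp add: has_real_derivative_iff_has_vector_derivative)
  qed
  then show ?thesis by (simp add: G_def)
qed

lemma kernel_right_absint:
  fixes c d e :: real assumes cd: "c \<le> d" and e: "e > -1"
  shows "(\<lambda>x. (x - c) powr e) absolutely_integrable_on {c..d}"
  using kernel_right_has_integral[OF assms] by (intro nonnegative_absolutely_integrable_1) auto

lemma kernel_left_absint:
  fixes c d e :: real assumes cd: "c \<le> d" and e: "e > -1"
  shows "(\<lambda>x. (d - x) powr e) absolutely_integrable_on {c..d}"
  using kernel_left_has_integral[OF assms] by (intro nonnegative_absolutely_integrable_1) auto

lemma meas_fst: "u \<in> borel_measurable borel \<Longrightarrow> (\<lambda>p. u (fst p)) \<in> borel_measurable (lborel \<Otimes>\<^sub>M lborel)"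
  by (rule measurable_compose[OF measurable_fst]) (simp add: measurable_lborel1)

lemma meas_snd: "u \<in> borel_measurable borel \<Longrightarrow> (\<lambda>p. u (snd p)) \<in> borel_measurable (lborel \<Otimes>\<^sub>M lborel)"
  by (rule measurable_compose[OF measurable_snd]) (simp add: measurable_lborel1)



lemma absint_to_lborel:
  fixes f :: "real \<Rightarrow> real"
  assumes "f absolutely_integrable_on S" "(\<lambda>x. indicator S x * f x) \<in> borel_measurable borel"
  shows "integrable lborel (\<lambda>x. indicator S x * f x)"
proof -
  have "integrable lebesgue (\<lambda>x. indicator S x *\<^sub>R f x)" using assms(1) unfolding set_integrable_def by simp
  then have "integrable lebesgue (\<lambda>x. indicator S x * f x)" by simp
  moreover have "(\<lambda>x. indicator S x * f x) \<in> borel_measurable lborel" using assms(2) by simp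
  ultimately show ?thesis using integrable_completion by blast
qed

lemma lborel_to_HK:
  fixes f :: "real \<Rightarrow> real"
  assumes "integrable lborel (\<lambda>x. indicator S x * f x)"
  shows "(f has_integral (LBINT x. indicator S x * f x)) S"
proof -
  have si: "set_integrable lborel S f" unfolding set_integrable_def using assms by simp
  have "set_lebesgue_integral lborel S f = integral S f" using set_borel_integral_eq_integral(2)[OF si] .
  moreover have "set_lebesgue_integral lborel S f = (LBINT x. indicator S x * f x)" unfolding set_lebesgue_integral_def by simp
  ultimately show ?thesis using set_borel_integral_eq_integral(1)[OF si] by (simp add: has_integral_iff)
qed

lemma null_lborel_negligible: "N \<in> null_sets lborel \<Longrightarrow> negligible N"
  using negligible_iff_null_sets null_sets_completionI by blast



lemma meas_on_sub:
  fixes u :: "real \<Rightarrow> real"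
  assumes "(\<lambda>x. indicator S x * u x) \<in> borel_measurable borel" "T \<subseteq> S"
  shows "u \<in> borel_measurable (lebesgue_on T)"
proof -
  have "(\<lambda>x. indicator S x * u x) \<in> borel_measurable (lebesgue_on T)"
    using assms(1) by (intro measurable_restrict_space1 measurable_completion) simp
  then show ?thesis
    by (rule measurable_cong[THEN iffD1, rotated]) (use assms(2) in \<open>auto simp: indicator_def\<close>)
qed

lemma fubini_triangle:
  fixes u v :: "real \<Rightarrow> real" and a b e B :: real
  assumes ab: "a \<le> b" and e: "e > -1"
    and um: "(\<lambda>x. indicator {a..b} x * u x) \<in> borel_measurable borel"
    and ub: "\<And>x. x \<in> {a..b} \<Longrightarrow> \<bar>u x\<bar> \<le> B"
    and vm: "(\<lambda>x. indicator {a..b} x * v x) \<in> borel_measurable borel"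
    and vi: "v absolutely_integrable_on {a..b}"
  shows "((\<lambda>x. u x * integral {a..x} (\<lambda>t. (x - t) powr e * v t)) has_integral
           integral {a..b} (\<lambda>t. v t * integral {t..b} (\<lambda>x. (x - t) powr e * u x))) {a..b}"
    and "(\<lambda>t. v t * integral {t..b} (\<lambda>x. (x - t) powr e * u x)) integrable_on {a..b}"
proof -
  define U where "U x = indicator {a..b} x * u x" for x
  define V where "V t = indicator {a..b} t * v t" for t
  define K where "K x t = (if t \<le> x then (x - t) powr e else 0)" for x t :: real
  define f where "f x t = U x * V t * K x t" for x t
  have B0: "B \<ge> 0" using ub[of a] ab by auto
  have Um[measurable]: "U \<in> borel_measurable borel" using um unfolding U_def .
  have Vm[measurable]: "V \<in> borel_measurable borel" using vm unfolding V_def .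
  have Km: "(\<lambda>p. K (fst p) (snd p)) \<in> borel_measurable (lborel \<Otimes>\<^sub>M lborel)"
    unfolding K_def by measurable
  have fm: "(\<lambda>p. f (fst p) (snd p)) \<in> borel_measurable (lborel \<Otimes>\<^sub>M lborel)"
    unfolding f_def using meas_fst[OF Um] meas_snd[OF Vm] Km by (intro borel_measurable_times)
  have fm': "(\<lambda>(x, t). f x t) \<in> borel_measurable (lborel \<Otimes>\<^sub>M lborel)"
    using fm by (simp add: case_prod_beta')
  have Vi: "integrable lborel V" unfolding V_def by (rule absint_to_lborel[OF vi vm])
  define C where "C = (b - a) powr (e+1) / (e+1)"
  have C0: "C \<ge> 0" unfolding C_def using e by simp
  have inner: "(\<integral>\<^sup>+ x. ennreal (norm (f x t)) \<partial>lborel) \<le> ennreal (B * C) * ennreal (norm (V t))" for t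
  proof (cases "t \<in> {a..b}")
    case False
    then have "\<And>x. f x t = 0" by (simp add: f_def V_def)
    then show ?thesis by simp
  next
    case True
    have pw: "ennreal (norm (f x t)) \<le> ennreal (B * norm (V t)) * ennreal (indicator {t..b} x * (x - t) powr e)" for x
    proof -
      have "norm (f x t) \<le> B * norm (V t) * (indicator {t..b} x * (x - t) powr e)"
      proof (cases "x \<in> {a..b} \<and> t \<le> x")
        case True
        then have "x \<in> {t..b}" by auto
        then have "norm (f x t) = \<bar>u x\<bar> * norm (V t) * (x - t) powr e"
          using True by (simp add: f_def U_def K_def abs_mult)
        also have "\<dots> \<le> B * norm (V t) * (x - t) powr e"
          using ub True by (intro mult_right_mono) auto
        finally show ?thesis using \<open>x \<in> {t..b}\<close> by simp
      next
        case False
        then have "f x t = 0" by (auto simp: f_def U_def K_def)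
        then show ?thesis using B0 by simp
      qed
      then show ?thesis by (simp add: ennreal_mult'[symmetric] B0)
    qed
    have "(\<integral>\<^sup>+ x. ennreal (norm (f x t)) \<partial>lborel) \<le> (\<integral>\<^sup>+ x. ennreal (B * norm (V t)) * ennreal (indicator {t..b} x * (x - t) powr e) \<partial>lborel)"
      by (intro nn_integral_mono pw)
    also have "\<dots> = ennreal (B * norm (V t)) * (\<integral>\<^sup>+ x. ennreal (indicator {t..b} x * (x - t) powr e) \<partial>lborel)"
      by (rule nn_integral_cmult) measurable
    also have "(\<integral>\<^sup>+ x. ennreal (indicator {t..b} x * (x - t) powr e) \<partial>lborel) = ennreal ((b - t) powr (e+1) / (e+1))"
      using True by (intro nn_integral_has_integral_lebesgue kernel_right_has_integral e) auto
    also have "(b - t) powr (e+1) / (e+1) \<le> C"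
      unfolding C_def using True e by (intro divide_right_mono powr_mono2) auto
    then have "ennreal (B * norm (V t)) * ennreal ((b - t) powr (e+1) / (e+1)) \<le> ennreal (B * norm (V t)) * ennreal C"
      by (intro mult_left_mono ennreal_leI) auto
    finally show ?thesis by (simp add: ennreal_mult'[symmetric] B0 C0 mult_ac)
  qed
  have fi: "integrable (lborel \<Otimes>\<^sub>M lborel) (\<lambda>(x, t). f x t)"
  proof (rule integrableI_bounded[OF fm'])
    have "(\<integral>\<^sup>+ p. ennreal (norm ((\<lambda>(x, t). f x t) p)) \<partial>(lborel \<Otimes>\<^sub>M lborel)) =
          (\<integral>\<^sup>+ t. \<integral>\<^sup>+ x. ennreal (norm (f x t)) \<partial>lborel \<partial>lborel)"
    proof -
      have m: "(\<lambda>p. ennreal (norm ((\<lambda>(x, t). f x t) p))) \<in> borel_measurable (lborel \<Otimes>\<^sub>M lborel)"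
        using fm' by measurable
      show ?thesis using lborel_pair.nn_integral_snd[OF m] by simp
    qed
    also have "\<dots> \<le> (\<integral>\<^sup>+ t. ennreal (B * C) * ennreal (norm (V t)) \<partial>lborel)"
      by (intro nn_integral_mono inner)
    also have "\<dots> = ennreal (B * C) * (\<integral>\<^sup>+ t. ennreal (norm (V t)) \<partial>lborel)"
      by (rule nn_integral_cmult) measurable
    also have "\<dots> < \<infinity>"
      using Vi unfolding integrable_iff_bounded by (simp add: ennreal_mult_less_top)
    finally show "(\<integral>\<^sup>+ p. ennreal (norm ((\<lambda>(x, t). f x t) p)) \<partial>(lborel \<Otimes>\<^sub>M lborel)) < \<infinity>" .
  qed
  define G where "G t = v t * integral {t..b} (\<lambda>x. (x - t) powr e * u x)" for t
  define W where "W x = u x * integral {a..x} (\<lambda>t. (x - t) powr e * v t)" for x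
  have Fub: "(LBINT t. LBINT x. f x t) = (LBINT x. LBINT t. f x t)"
    using lborel_pair.Fubini_integral[OF fi] .
  have int_fst: "integrable lborel (\<lambda>x. LBINT t. f x t)" using lborel_pair.integrable_fst[OF fi] .
  have int_snd: "integrable lborel (\<lambda>t. LBINT x. f x t)" using lborel_pair.integrable_snd[OF fi] .
  have AEi: "AE x in lborel. integrable lborel (f x)" using lborel_pair.AE_integrable_fst[OF fi] .
  have inner_t: "(LBINT x. f x t) = indicator {a..b} t * G t" for t
  proof (cases "t \<in> {a..b}")
    case False
    then have "\<And>x. f x t = 0" by (simp add: f_def V_def)
    then show ?thesis using False by simp
  next
    case True
    define g where "g x = (x - t) powr e * u x" for x
    have fx: "f x t = v t * (indicator {t..b} x * g x)" for x
      using True by (auto simp: f_def U_def V_def K_def g_def indicator_def)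
    have gabs: "g absolutely_integrable_on {t..b}"
    proof -
      have "(\<lambda>x. u x * (x - t) powr e) absolutely_integrable_on {t..b}"
      proof (rule absolutely_integrable_bounded_measurable_product_real)
        show "u \<in> borel_measurable (lebesgue_on {t..b})" by (rule meas_on_sub[OF um]) (use True in auto)
        show "bounded (u ` {t..b})" unfolding bounded_iff
        proof (intro exI ballI)
          fix y assume "y \<in> u ` {t..b}"
          then obtain z where "z \<in> {t..b}" "y = u z" by blast
          then show "norm y \<le> B" using ub[of z] True by auto
        qed
        show "(\<lambda>x. (x - t) powr e) absolutely_integrable_on {t..b}" using kernel_right_absint True e by auto
      qed auto
      then show ?thesis unfolding g_def by (simp add: mult.commute)
    qed
    have gm: "(\<lambda>x. indicator {t..b} x * g x) \<in> borel_measurable borel"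
    proof -
      have "(\<lambda>x. indicator {t..b} x * ((x - t) powr e * U x)) \<in> borel_measurable borel" by measurable
      moreover have "(\<lambda>x. indicator {t..b} x * ((x - t) powr e * U x)) = (\<lambda>x. indicator {t..b} x * g x)"
        using True by (auto simp: U_def g_def indicator_def)
      ultimately show ?thesis by simp
    qed
    have gi: "integrable lborel (\<lambda>x. indicator {t..b} x * g x)" by (rule absint_to_lborel[OF gabs gm])
    have "(LBINT x. f x t) = v t * (LBINT x. indicator {t..b} x * g x)"
      unfolding fx by (rule integral_mult_right_zero)
    also have "(LBINT x. indicator {t..b} x * g x) = integral {t..b} g"
      using lborel_to_HK[OF gi] by (simp add: integral_unique)
    finally show ?thesis using True by (simp add: G_def g_def[abs_def])
  qed
  have inner_x: "(LBINT t. f x t) = indicator {a..b} x * W x" if fxi: "integrable lborel (f x)" for x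
  proof (cases "x \<in> {a..b}")
    case False
    then have "\<And>t. f x t = 0" by (simp add: f_def U_def)
    then show ?thesis using False by simp
  next
    case True
    define h where "h t = (x - t) powr e * v t" for t
    have ft: "f x t = u x * (indicator {a..x} t * h t)" for t
      using True by (auto simp: f_def U_def V_def K_def h_def indicator_def)
    show ?thesis
    proof (cases "u x = 0")
      case True
      then show ?thesis using \<open>x \<in> {a..b}\<close> by (simp add: ft W_def)
    next
      case False
      have "integrable lborel (\<lambda>t. u x * (indicator {a..x} t * h t))" using fxi unfolding ft[abs_def] .
      then have hi: "integrable lborel (\<lambda>t. indicator {a..x} t * h t)" using False integrable_mult_left_iff by blast
      have "(LBINT t. f x t) = u x * (LBINT t. indicator {a..x} t * h t)"
        unfolding ft by (rule integral_mult_right_zero)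
      also have "(LBINT t. indicator {a..x} t * h t) = integral {a..x} h"
        using lborel_to_HK[OF hi] by (simp add: integral_unique)
      finally show ?thesis using \<open>x \<in> {a..b}\<close> by (simp add: W_def h_def[abs_def])
    qed
  qed
  have Gint: "integrable lborel (\<lambda>t. indicator {a..b} t * G t)"
    using int_snd unfolding inner_t .
  have Ghas: "(G has_integral (LBINT t. indicator {a..b} t * G t)) {a..b}" by (rule lborel_to_HK[OF Gint])
  then show "(\<lambda>t. v t * integral {t..b} (\<lambda>x. (x - t) powr e * u x)) integrable_on {a..b}"
    unfolding G_def by blast
  have GI: "integral {a..b} G = (LBINT t. indicator {a..b} t * G t)" using Ghas by (simp add: integral_unique)
  obtain N where N: "\<And>x. x \<in> space lborel - N \<Longrightarrow> integrable lborel (f x)" "N \<in> null_sets lborel"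
    by (rule AE_E3[OF AEi]) blast
  have "((\<lambda>x. LBINT t. f x t) has_integral (LBINT x. LBINT t. f x t)) UNIV"
    by (rule has_integral_integral_lborel[OF int_fst])
  then have "((\<lambda>x. if x \<in> {a..b} then W x else 0) has_integral (LBINT x. LBINT t. f x t)) UNIV"
  proof (rule has_integral_spike[OF null_lborel_negligible[OF N(2)], rotated])
    fix x assume "x \<in> UNIV - N"
    then have "integrable lborel (f x)" using N(1) by simp
    then show "(if x \<in> {a..b} then W x else 0) = (LBINT t. f x t)" using inner_x by (simp add: indicator_def)
  qed
  then have "(W has_integral (LBINT x. LBINT t. f x t)) {a..b}" by (simp only: has_integral_restrict_UNIV)
  moreover have "(LBINT x. LBINT t. f x t) = integral {a..b} G"
    using Fub GI inner_t by simp
  ultimately show "((\<lambda>x. u x * integral {a..x} (\<lambda>t. (x - t) powr e * v t)) has_integral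
           integral {a..b} (\<lambda>t. v t * integral {t..b} (\<lambda>x. (x - t) powr e * u x))) {a..b}"
    unfolding W_def G_def by simp
qed



lemma antimono_bv: assumes "\<And>s t. a \<le> s \<Longrightarrow> s \<le> t \<Longrightarrow> t \<le> b \<Longrightarrow> g t \<le> g s"
  shows "bv_le g a b (g a - g b)"
proof -
  have "bv_le (\<lambda>t. - g t) a b ((- g b) - (- g a))" by (rule mono_bv) (use assms in auto)
  then show ?thesis unfolding bv_le_def vsum_def by (simp add: abs_minus_commute)
qed

lemma mono_bounded_var: "(\<And>s t. a \<le> s \<Longrightarrow> s \<le> t \<Longrightarrow> t \<le> b \<Longrightarrow> g s \<le> g t) \<Longrightarrow> bounded_var g a b"
  using mono_bv bounded_var_bv_le by blast

lemma antimono_bounded_var: "(\<And>s t. a \<le> s \<Longrightarrow> s \<le> t \<Longrightarrow> t \<le> b \<Longrightarrow> g t \<le> g s) \<Longrightarrow> bounded_var g a b"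
  using antimono_bv bounded_var_bv_le by blast

lemma bounded_var_cong: "bounded_var f a b \<Longrightarrow> (\<And>t. t \<in> {a..b} \<Longrightarrow> f t = g t) \<Longrightarrow> bounded_var g a b"
  using bv_le_cong bounded_var_bv_le by metis

lemma bv_kernel_absint:
  fixes U :: "real \<Rightarrow> real"
  assumes ab: "a \<le> x" "x \<le> b" and e: "e > -1" and bv: "bounded_var U a b" and "a \<le> b"
  shows "(\<lambda>t. (t - x) powr e * U t) absolutely_integrable_on {x..b}"
proof -
  have "(\<lambda>t. U t * (t - x) powr e) absolutely_integrable_on {x..b}"
  proof (rule absolutely_integrable_bounded_measurable_product_real)
    show "U \<in> borel_measurable (lebesgue_on {x..b})"
      by (rule meas_on_sub[OF bv_indicator_measurable[OF bv \<open>a \<le> b\<close>]]) (use ab in auto)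
    have "bounded (U ` {a..b})" by (rule bv_bounded_image[OF bv])
    then show "bounded (U ` {x..b})" by (rule bounded_subset) (use ab in auto)
    show "(\<lambda>t. (t - x) powr e) absolutely_integrable_on {x..b}" using kernel_right_absint ab e by auto
  qed auto
  then show ?thesis by (simp add: mult.commute)
qed

lemma psi_mono_bv:
  fixes U :: "real \<Rightarrow> real"
  assumes ab: "a \<le> b" and e: "e > -1" and Um: "\<And>s t. a \<le> s \<Longrightarrow> s \<le> t \<Longrightarrow> t \<le> b \<Longrightarrow> U s \<le> U t"
  shows "bounded_var (\<lambda>x. integral {x..b} (\<lambda>t. (t - x) powr e * U t)) a b"
proof -
  have bvU: "bounded_var U a b" using mono_bounded_var Um by blast
  define D where "D t = U b - U t" for t
  have bvD: "bounded_var D a b" unfolding D_def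
    using bounded_var_lincomb[of "\<lambda>t. U b" a b U 1 "-1"] mono_bounded_var[of a b "\<lambda>t. U b"] bvU by simp
  define R where "R x = integral {x..b} (\<lambda>t. (t - x) powr e * D t)" for x
  have Dint: "(\<lambda>t. (t - x) powr e * D t) integrable_on {x..b}" if "a \<le> x" "x \<le> b" for x
    using bv_kernel_absint[OF that e bvD ab] set_lebesgue_integral_eq_integral(1) by blast
  have Uint: "(\<lambda>t. (t - x) powr e * U t) integrable_on {x..b}" if "a \<le> x" "x \<le> b" for x
    using bv_kernel_absint[OF that e bvU ab] set_lebesgue_integral_eq_integral(1) by blast
  have split: "integral {x..b} (\<lambda>t. (t - x) powr e * U t) = U b * ((b - x) powr (e+1) / (e+1)) - R x"
    if "a \<le> x" "x \<le> b" for x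
  proof -
    have "integral {x..b} (\<lambda>t. U b * (t - x) powr e - (t - x) powr e * D t) =
          integral {x..b} (\<lambda>t. U b * (t - x) powr e) - R x"
      unfolding R_def
      by (rule Henstock_Kurzweil_Integration.integral_diff[OF integrable_on_mult_right Dint[OF that]])
         (use kernel_right_has_integral[OF that(2) e] in blast)
    also have "integral {x..b} (\<lambda>t. U b * (t - x) powr e) = U b * ((b - x) powr (e+1) / (e+1))"
      using kernel_right_has_integral[OF that(2) e] by (simp add: integral_unique)
    finally show ?thesis by (simp add: D_def algebra_simps)
  qed
  have Ranti: "R y \<le> R x" if xy: "a \<le> x" "x \<le> y" "y \<le> b" for x y
  proof -
    have D0: "D t \<ge> 0" if "t \<le> b" "a \<le> t" for t using Um[of t b] that by (simp add: D_def)
    have Dmono: "D t \<le> D s" if "a \<le> s" "s \<le> t" "t \<le> b" for s t using Um[OF that] by (simp add: D_def)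
    have hx: "((\<lambda>s. s powr e * D (s + x)) has_integral R x) {0..b - x}"
    proof -
      have "((\<lambda>t. (t - x) powr e * D t) has_integral R x) {x..b}"
        unfolding R_def using Dint[of x] xy by (simp add: integrable_integral)
      from has_integral_shift_real_ivl[OF this, of x] show ?thesis by simp
    qed
    have hy: "((\<lambda>s. s powr e * D (s + y)) has_integral R y) {0..b - y}"
    proof -
      have "((\<lambda>t. (t - y) powr e * D t) has_integral R y) {y..b}"
        unfolding R_def using Dint[of y] xy by (simp add: integrable_integral)
      from has_integral_shift_real_ivl[OF this, of y] show ?thesis by simp
    qed
    have ix: "(\<lambda>s. s powr e * D (s + x)) integrable_on {0..b - x}" using hx by blast
    have ix': "(\<lambda>s. s powr e * D (s + x)) integrable_on {0..b - y}"
      by (rule integrable_on_subinterval[OF ix]) (use xy in auto)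
    have ix'': "(\<lambda>s. s powr e * D (s + x)) integrable_on {b - y..b - x}"
      by (rule integrable_on_subinterval[OF ix]) (use xy in auto)
    have "R y \<le> integral {0..b - y} (\<lambda>s. s powr e * D (s + x))"
    proof -
      have "integral {0..b - y} (\<lambda>s. s powr e * D (s + y)) \<le> integral {0..b - y} (\<lambda>s. s powr e * D (s + x))"
      proof (rule integral_le)
        show "(\<lambda>s. s powr e * D (s + y)) integrable_on {0..b - y}" using hy by blast
        show "(\<lambda>s. s powr e * D (s + x)) integrable_on {0..b - y}" by (fact ix')
        fix s assume s: "s \<in> {0..b - y}"
        have "D (s + y) \<le> D (s + x)" using Dmono[of "s + x" "s + y"] s xy by auto
        then show "s powr e * D (s + y) \<le> s powr e * D (s + x)" by (intro mult_left_mono) auto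
      qed
      then show ?thesis using hy by (simp add: integral_unique)
    qed
    also have "\<dots> \<le> integral {0..b - y} (\<lambda>s. s powr e * D (s + x)) + integral {b - y..b - x} (\<lambda>s. s powr e * D (s + x))"
    proof -
      have "0 \<le> integral {b - y..b - x} (\<lambda>s. s powr e * D (s + x))"
        by (rule integral_nonneg[OF ix'']) (use xy D0 in auto)
      then show ?thesis by simp
    qed
    also have "\<dots> = integral {0..b - x} (\<lambda>s. s powr e * D (s + x))"
      by (rule Henstock_Kurzweil_Integration.integral_combine[OF _ _ ix]) (use xy in auto)
    also have "\<dots> = R x" using hx by (simp add: integral_unique)
    finally show ?thesis .
  qed
  have bvR: "bounded_var R a b" by (rule antimono_bounded_var) (use Ranti in auto)
  have bvK: "bounded_var (\<lambda>x. (b - x) powr (e+1) / (e+1)) a b"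
  proof (rule antimono_bounded_var)
    fix s t assume "a \<le> s" "s \<le> t" "t \<le> b"
    then show "(b - t) powr (e+1) / (e+1) \<le> (b - s) powr (e+1) / (e+1)"
      using e by (intro divide_right_mono powr_mono2) auto
  qed
  have "bounded_var (\<lambda>x. U b * ((b - x) powr (e+1) / (e+1)) + (-1) * R x) a b"
    by (rule bounded_var_lincomb[OF bvK bvR])
  then show ?thesis by (rule bounded_var_cong) (use split in auto)
qed

lemma rl_kernel_pos: "y > 0 \<Longrightarrow> rl_kernel n y = y powr (n - 1)"
  by (simp add: rl_kernel_def)

lemma rl_right_spike: "integral {x..b} (\<lambda>t. rl_kernel n (t - x) * f t) = integral {x..b} (\<lambda>t. (t - x) powr (n - 1) * f t)"
  by (rule integral_spike[of "{x}"]) (auto simp: rl_kernel_pos)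

lemma rl_left_spike: "integral {a..x} (\<lambda>t. rl_kernel n (x - t) * f t) = integral {a..x} (\<lambda>t. (x - t) powr (n - 1) * f t)"
  by (rule integral_spike[of "{x}"]) (auto simp: rl_kernel_pos)

lemma RL_right_eq: "RL_right b n \<phi> x = (1 / Gamma n) * integral {x..b} (\<lambda>t. (t - x) powr (n - 1) * \<phi> t)"
  unfolding RL_right_def rl_right_spike ..

lemma RL_right_b: "RL_right b n \<phi> b = 0"
  unfolding RL_right_def by simp

lemma RL_right_bv:
  fixes \<phi> :: "real \<Rightarrow> real"
  assumes ab: "a \<le> b" and n: "n > 0" and bv: "bounded_var \<phi> a b"
  shows "bounded_var (RL_right b n \<phi>) a b"
proof -
  obtain M where M: "bv_le \<phi> a b M" using bv bounded_var_bv_le by blast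
  define V where "V = bvar \<phi> a"
  define W where "W t = V t - \<phi> t" for t
  have e: "n - 1 > -1" using n by simp
  have Vm: "V s \<le> V t" if "a \<le> s" "s \<le> t" "t \<le> b" for s t using bvar_mono(1)[OF M that] unfolding V_def .
  have Wm: "W s \<le> W t" if "a \<le> s" "s \<le> t" "t \<le> b" for s t using bvar_mono(2)[OF M that] unfolding W_def V_def .
  have bvV: "bounded_var V a b" using mono_bounded_var Vm by blast
  have bvW: "bounded_var W a b" using mono_bounded_var Wm by blast
  have bvPV: "bounded_var (\<lambda>x. integral {x..b} (\<lambda>t. (t - x) powr (n - 1) * V t)) a b"
    by (rule psi_mono_bv[OF ab e]) (use Vm in auto)
  have bvPW: "bounded_var (\<lambda>x. integral {x..b} (\<lambda>t. (t - x) powr (n - 1) * W t)) a b"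
    by (rule psi_mono_bv[OF ab e]) (use Wm in auto)
  have "bounded_var (\<lambda>x. (1 / Gamma n) * integral {x..b} (\<lambda>t. (t - x) powr (n - 1) * V t)
          + (- (1 / Gamma n)) * integral {x..b} (\<lambda>t. (t - x) powr (n - 1) * W t)) a b"
    by (rule bounded_var_lincomb[OF bvPV bvPW])
  then show ?thesis
  proof (rule bounded_var_cong)
    fix x assume x: "x \<in> {a..b}"
    have iV: "(\<lambda>t. (t - x) powr (n - 1) * V t) integrable_on {x..b}"
      using bv_kernel_absint[of a x b "n - 1" V] x e bvV ab set_lebesgue_integral_eq_integral(1) by auto
    have iW: "(\<lambda>t. (t - x) powr (n - 1) * W t) integrable_on {x..b}"
      using bv_kernel_absint[of a x b "n - 1" W] x e bvW ab set_lebesgue_integral_eq_integral(1) by auto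
    have "integral {x..b} (\<lambda>t. (t - x) powr (n - 1) * \<phi> t) =
          integral {x..b} (\<lambda>t. (t - x) powr (n - 1) * V t - (t - x) powr (n - 1) * W t)"
      by (rule integral_cong) (simp add: W_def algebra_simps)
    also have "\<dots> = integral {x..b} (\<lambda>t. (t - x) powr (n - 1) * V t) - integral {x..b} (\<lambda>t. (t - x) powr (n - 1) * W t)"
      by (rule Henstock_Kurzweil_Integration.integral_diff[OF iV iW])
    finally have eq: "integral {x..b} (\<lambda>t. (t - x) powr (n - 1) * \<phi> t) = integral {x..b} (\<lambda>t. (t - x) powr (n - 1) * V t) - integral {x..b} (\<lambda>t. (t - x) powr (n - 1) * W t)" .
    show "(1 / Gamma n) * integral {x..b} (\<lambda>t. (t - x) powr (n - 1) * V t)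
          + (- (1 / Gamma n)) * integral {x..b} (\<lambda>t. (t - x) powr (n - 1) * W t) = RL_right b n \<phi> x"
      unfolding RL_right_eq eq by (simp add: right_diff_distrib)
  qed
qed



definition Jleft :: "real \<Rightarrow> real \<Rightarrow> (real \<Rightarrow> real) \<Rightarrow> real \<Rightarrow> real" where
  "Jleft a e f x = integral {a..x} (\<lambda>t. (x - t) powr e * f t)"

lemma kernel_bounded_absint:
  fixes f :: "real \<Rightarrow> real"
  assumes ax: "a \<le> x" and e: "e > -1" and fm: "f \<in> borel_measurable (lebesgue_on {a..x})"
    and fb: "\<And>t. t \<in> {a..x} \<Longrightarrow> \<bar>f t\<bar> \<le> B"
  shows "(\<lambda>t. (x - t) powr e * f t) absolutely_integrable_on {a..x}"
proof -
  have "(\<lambda>t. f t * (x - t) powr e) absolutely_integrable_on {a..x}"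
  proof (rule absolutely_integrable_bounded_measurable_product_real[OF fm])
    show "bounded (f ` {a..x})" unfolding bounded_iff
    proof (intro exI ballI)
      fix y assume "y \<in> f ` {a..x}"
      then obtain z where "z \<in> {a..x}" "y = f z" by blast
      then show "norm y \<le> B" using fb[of z] by auto
    qed
    show "(\<lambda>t. (x - t) powr e) absolutely_integrable_on {a..x}" by (rule kernel_left_absint[OF ax e])
  qed auto
  then show ?thesis by (simp add: mult.commute)
qed

lemma Jleft_bound:
  fixes f :: "real \<Rightarrow> real"
  assumes ax: "a \<le> x" and e: "e > -1" and fm: "f \<in> borel_measurable (lebesgue_on {a..x})"
    and fb: "\<And>t. t \<in> {a..x} \<Longrightarrow> \<bar>f t\<bar> \<le> B"
  shows "\<bar>Jleft a e f x\<bar> \<le> B * ((x - a) powr (e+1) / (e+1))"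
proof -
  have ki: "((\<lambda>t. B * (x - t) powr e) has_integral B * ((x - a) powr (e+1) / (e+1))) {a..x}"
    using has_integral_mult_right[OF kernel_left_has_integral[OF ax e]] by simp
  have "norm (Jleft a e f x) \<le> integral {a..x} (\<lambda>t. B * (x - t) powr e)"
    unfolding Jleft_def
  proof (rule Henstock_Kurzweil_Integration.integral_norm_bound_integral)
    show "(\<lambda>t. (x - t) powr e * f t) integrable_on {a..x}"
      using kernel_bounded_absint[OF assms] set_lebesgue_integral_eq_integral(1) by blast
    show "(\<lambda>t. B * (x - t) powr e) integrable_on {a..x}" using ki by blast
    fix t assume t: "t \<in> {a..x}"
    have "\<bar>f t\<bar> * (x - t) powr e \<le> B * (x - t) powr e" using fb[OF t] by (intro mult_right_mono) auto
    then show "norm ((x - t) powr e * f t) \<le> B * (x - t) powr e" by (simp add: abs_mult mult.commute)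
  qed
  also have "integral {a..x} (\<lambda>t. B * (x - t) powr e) = B * ((x - a) powr (e+1) / (e+1))"
    by (rule integral_unique[OF ki])
  finally show ?thesis by simp
qed

lemma Jleft_diff:
  fixes f1 f2 :: "real \<Rightarrow> real"
  assumes ax: "a \<le> x" and e: "e > -1"
    and m1: "f1 \<in> borel_measurable (lebesgue_on {a..x})" and b1: "\<And>t. t \<in> {a..x} \<Longrightarrow> \<bar>f1 t\<bar> \<le> B1"
    and m2: "f2 \<in> borel_measurable (lebesgue_on {a..x})" and b2: "\<And>t. t \<in> {a..x} \<Longrightarrow> \<bar>f2 t\<bar> \<le> B2"
  shows "Jleft a e f1 x - Jleft a e f2 x = Jleft a e (\<lambda>t. f1 t - f2 t) x"
proof -
  have i1: "(\<lambda>t. (x - t) powr e * f1 t) integrable_on {a..x}"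
    using kernel_bounded_absint[OF ax e m1 b1] set_lebesgue_integral_eq_integral(1) by blast
  have i2: "(\<lambda>t. (x - t) powr e * f2 t) integrable_on {a..x}"
    using kernel_bounded_absint[OF ax e m2 b2] set_lebesgue_integral_eq_integral(1) by blast
  show ?thesis unfolding Jleft_def
    using Henstock_Kurzweil_Integration.integral_diff[OF i1 i2] by (simp add: right_diff_distrib)
qed

lemma FT_unit:
  fixes v :: "real \<Rightarrow> real"
  assumes ax: "a \<le> x" and e: "e > -1"
    and vm: "(\<lambda>t. indicator {a..x} t * v t) \<in> borel_measurable borel"
    and vi: "v absolutely_integrable_on {a..x}"
  shows "((\<lambda>s. Jleft a e v s) has_integral integral {a..x} (\<lambda>t. v t * ((x - t) powr (e+1) / (e+1)))) {a..x}"
proof -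
  have um: "(\<lambda>s. indicator {a..x} s * (1::real)) \<in> borel_measurable borel" by measurable
  have "((\<lambda>s. 1 * integral {a..s} (\<lambda>t. (s - t) powr e * v t)) has_integral
           integral {a..x} (\<lambda>t. v t * integral {t..x} (\<lambda>s. (s - t) powr e * 1))) {a..x}"
    by (rule fubini_triangle(1)[OF ax e um _ vm vi, of 1]) auto
  moreover have "integral {a..x} (\<lambda>t. v t * integral {t..x} (\<lambda>s. (s - t) powr e * 1)) =
                 integral {a..x} (\<lambda>t. v t * ((x - t) powr (e+1) / (e+1)))"
  proof (rule integral_cong)
    fix t assume "t \<in> {a..x}"
    then have "integral {t..x} (\<lambda>s. (s - t) powr e) = (x - t) powr (e+1) / (e+1)"
      using kernel_right_has_integral[of t x e] e by (simp add: integral_unique)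
    then show "v t * integral {t..x} (\<lambda>s. (s - t) powr e * 1) = v t * ((x - t) powr (e+1) / (e+1))" by simp
  qed
  ultimately show ?thesis unfolding Jleft_def by simp
qed

lemma indef_cont:
  fixes G g :: "real \<Rightarrow> real"
  assumes gi: "g integrable_on {a..b}" and Gg: "\<And>s t. a \<le> s \<Longrightarrow> s \<le> t \<Longrightarrow> t \<le> b \<Longrightarrow> G t - G s = integral {s..t} g"
  shows "continuous_on {a..b} G"
proof -
  have "continuous_on {a..b} (\<lambda>x. G a + integral {a..x} g)"
    using indefinite_integral_continuous_1[OF gi] by (intro continuous_intros)
  then show ?thesis
  proof (rule continuous_on_eq)
    fix x assume x: "x \<in> {a..b}"
    have "G x - G a = integral {a..x} g" using Gg[of a x] x by auto
    then show "G a + integral {a..x} g = G x" by linarith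
  qed
qed

lemma JG_formula:
  fixes G g :: "real \<Rightarrow> real"
  assumes ax: "a \<le> x" and n: "n > 0" and G0: "G a = 0"
    and gi: "g absolutely_integrable_on {a..x}"
    and Gg: "\<And>s t. a \<le> s \<Longrightarrow> s \<le> t \<Longrightarrow> t \<le> x \<Longrightarrow> G t - G s = integral {s..t} g"
  shows "Jleft a (n - 1) G x = integral {a..x} (\<lambda>t. (x - t) powr n / n * g t)"
proof -
  have e: "n - 1 > -1" using n by simp
  have Gc: "continuous_on {a..x} G" using indef_cont[OF set_lebesgue_integral_eq_integral(1)[OF gi] Gg] by blast
  define w where "w t = - ((x - t) powr n / n)" for t
  have kint: "((\<lambda>r. (x - r) powr (n - 1)) has_integral (x - s) powr n / n) {s..x}" if "s \<le> x" for s
    using kernel_left_has_integral[OF that e] by simp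
  have wdiff: "w t - w s = integral {s..t} (\<lambda>r. (x - r) powr (n - 1))" if "a \<le> s" "s \<le> t" "t \<le> x" for s t
  proof -
    have sx: "s \<le> x" "t \<le> x" using that by linarith+
    have i: "(\<lambda>r. (x - r) powr (n - 1)) integrable_on {s..x}" using kint[OF sx(1)] by blast
    have "integral {s..t} (\<lambda>r. (x - r) powr (n - 1)) + integral {t..x} (\<lambda>r. (x - r) powr (n - 1)) =
          integral {s..x} (\<lambda>r. (x - r) powr (n - 1))"
      by (rule Henstock_Kurzweil_Integration.integral_combine[OF that(2) that(3) i])
    moreover have "integral {s..x} (\<lambda>r. (x - r) powr (n - 1)) = (x - s) powr n / n" by (rule integral_unique[OF kint[OF sx(1)]])
    moreover have "integral {t..x} (\<lambda>r. (x - r) powr (n - 1)) = (x - t) powr n / n" by (rule integral_unique[OF kint[OF sx(2)]])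
    ultimately show ?thesis unfolding w_def by linarith
  qed
  have wc: "continuous_on {a..x} w"
    unfolding w_def using n by (intro continuous_intros continuous_on_powr') auto
  have A1: "has_RS_integral G w a x (integral {a..x} (\<lambda>t. G t * (x - t) powr (n - 1)))"
    by (rule RS_indef_cont[OF ax Gc kernel_left_absint[OF ax e] wdiff])
  have A2: "has_RS_integral w G a x (G x * w x - G a * w a - integral {a..x} (\<lambda>t. G t * (x - t) powr (n - 1)))"
    by (rule RS_ibp[OF ax A1])
  have A3: "has_RS_integral w G a x (integral {a..x} (\<lambda>t. w t * g t))"
    by (rule RS_indef_cont[OF ax wc gi Gg])
  have "G x * w x - G a * w a - integral {a..x} (\<lambda>t. G t * (x - t) powr (n - 1)) = integral {a..x} (\<lambda>t. w t * g t)"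
    by (rule RS_unique[OF ax A2 A3])
  moreover have "w x = 0" using n by (simp add: w_def)
  moreover have "integral {a..x} (\<lambda>t. w t * g t) = - integral {a..x} (\<lambda>t. (x - t) powr n / n * g t)"
    unfolding w_def by (subst integral_neg[symmetric]) (simp_all)
  ultimately show ?thesis unfolding Jleft_def using G0 by (simp add: mult.commute)
qed

lemma Gamma_pos_real: "(n::real) > 0 \<Longrightarrow> Gamma n > 0"
  by (rule Gamma_real_pos)

lemma RL_left_smooth:
  fixes G g :: "real \<Rightarrow> real"
  assumes n: "1 \<le> n" and ax: "a \<le> x" and G0: "G a = 0"
    and gi: "g absolutely_integrable_on {a..x}"
    and Gg: "\<And>s t. a \<le> s \<Longrightarrow> s \<le> t \<Longrightarrow> t \<le> x \<Longrightarrow> G t - G s = integral {s..t} g"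
  shows "RL_left a n G x = (1 / Gamma n) * Jleft a (n - 1) g x"
proof -
  define k where "k t = rl_kernel n (x - t)" for t
  have kc: "continuous_on {a..x} k"
  proof (cases "n = 1")
    case True
    then show ?thesis unfolding k_def rl_kernel_def by simp
  next
    case False
    then have "n - 1 > 0" using n by simp
    then have "continuous_on {a..x} (\<lambda>t. (x - t) powr (n - 1))"
      by (intro continuous_intros continuous_on_powr') auto
    then show ?thesis unfolding k_def rl_kernel_def using False by simp
  qed
  have A1: "has_RS_integral k G a x (integral {a..x} (\<lambda>t. k t * g t))"
    by (rule RS_indef_cont[OF ax kc gi Gg])
  have A2: "has_RS_integral G k a x (k x * G x - k a * G a - integral {a..x} (\<lambda>t. k t * g t))"
    by (rule RS_ibp[OF ax A1])
  have "RS_integral G k a x = k x * G x - integral {a..x} (\<lambda>t. k t * g t)"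
    using RS_integral_eqI[OF ax A2] G0 by simp
  then have "hk_pair G k a x = integral {a..x} (\<lambda>t. k t * g t)"
    unfolding hk_pair_def by (simp add: mult.commute)
  also have "\<dots> = Jleft a (n - 1) g x" unfolding k_def Jleft_def by (rule rl_left_spike)
  finally show ?thesis unfolding RL_left_def k_def by simp
qed

lemma rhs_smooth:
  fixes G g \<phi> :: "real \<Rightarrow> real"
  assumes ab: "a \<le> b" and n: "n > 0" and bv: "bounded_var \<phi> a b" and G0: "G a = 0"
    and gc: "continuous_on {a..b} g"
    and gm: "(\<lambda>t. indicator {a..b} t * g t) \<in> borel_measurable borel"
    and Gg: "\<And>s t. a \<le> s \<Longrightarrow> s \<le> t \<Longrightarrow> t \<le> b \<Longrightarrow> G t - G s = integral {s..t} g"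
  shows "RS_integral G (RL_right b n \<phi>) a b = - ((1 / Gamma n) * integral {a..b} (\<lambda>x. \<phi> x * Jleft a (n - 1) g x))"
    and "(\<lambda>x. \<phi> x * Jleft a (n - 1) g x) integrable_on {a..b}"
proof -
  define \<psi> where "\<psi> = RL_right b n \<phi>"
  have e: "n - 1 > -1" using n by simp
  have gi: "g absolutely_integrable_on {a..b}" by (rule absolutely_integrable_continuous_real[OF gc])
  have bvpsi: "bounded_var \<psi> a b" unfolding \<psi>_def by (rule RL_right_bv[OF ab n bv])
  have Gc: "continuous_on {a..b} G" using indef_cont[OF set_lebesgue_integral_eq_integral(1)[OF gi] Gg] by blast
  obtain I where I: "has_RS_integral G \<psi> a b I" using RS_exists[OF ab Gc bvpsi] by blast
  have A2: "has_RS_integral \<psi> G a b (G b * \<psi> b - G a * \<psi> a - I)" by (rule RS_ibp[OF ab I])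
  obtain H where H: "\<And>t. t \<in> {a..b} \<Longrightarrow> \<bar>g t\<bar> \<le> H"
  proof -
    have "bounded (g ` {a..b})" using gc compact_continuous_image compact_imp_bounded by blast
    then show ?thesis using that unfolding bounded_iff by fastforce
  qed
  have A3: "has_RS_integral \<psi> G a b (integral {a..b} (\<lambda>t. \<psi> t * g t))"
    by (rule RS_indef_bv[OF ab bvpsi gi H Gg])
  have "G b * \<psi> b - G a * \<psi> a - I = integral {a..b} (\<lambda>t. \<psi> t * g t)" by (rule RS_unique[OF ab A2 A3])
  then have I_eq: "I = - integral {a..b} (\<lambda>t. \<psi> t * g t)" using G0 RL_right_b unfolding \<psi>_def by simp
  have um: "(\<lambda>x. indicator {a..b} x * \<phi> x) \<in> borel_measurable borel" by (rule bv_indicator_measurable[OF bv ab])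
  obtain M where M: "bv_le \<phi> a b M" using bv bounded_var_bv_le by blast
  have ub: "\<And>x. x \<in> {a..b} \<Longrightarrow> \<bar>\<phi> x\<bar> \<le> \<bar>\<phi> a\<bar> + M" using bv_bounded[OF M] by auto
  note FT = fubini_triangle[OF ab e um ub gm gi]
  have "((\<lambda>x. \<phi> x * Jleft a (n - 1) g x) has_integral integral {a..b} (\<lambda>t. g t * integral {t..b} (\<lambda>x. (x - t) powr (n - 1) * \<phi> x))) {a..b}"
    using FT(1) unfolding Jleft_def .
  then show "(\<lambda>x. \<phi> x * Jleft a (n - 1) g x) integrable_on {a..b}" by blast
  have "integral {a..b} (\<lambda>t. \<psi> t * g t) = (1 / Gamma n) * integral {a..b} (\<lambda>t. g t * integral {t..b} (\<lambda>x. (x - t) powr (n - 1) * \<phi> x))"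
    unfolding \<psi>_def RL_right_eq by (simp add: mult.commute mult.left_commute)
  also have "integral {a..b} (\<lambda>t. g t * integral {t..b} (\<lambda>x. (x - t) powr (n - 1) * \<phi> x)) = integral {a..b} (\<lambda>x. \<phi> x * Jleft a (n - 1) g x)"
    using \<open>((\<lambda>x. \<phi> x * Jleft a (n - 1) g x) has_integral _) {a..b}\<close> by (simp add: integral_unique)
  finally show "RS_integral G (RL_right b n \<phi>) a b = - ((1 / Gamma n) * integral {a..b} (\<lambda>x. \<phi> x * Jleft a (n - 1) g x))"
    using RS_integral_eqI[OF ab I] I_eq unfolding \<psi>_def by simp
qed



definition PP :: "real \<Rightarrow> real \<Rightarrow> real \<Rightarrow> (real \<Rightarrow> real) \<Rightarrow> real \<Rightarrow> real" where
  "PP a b n F x = (if x \<in> {a..b} then (1 / Gamma n) * Jleft a (n - 1) F x else 0)"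

lemma cont_bounded: fixes F :: "real \<Rightarrow> real"
  assumes "continuous_on {a..b} F" obtains B where "\<And>t. t \<in> {a..b} \<Longrightarrow> \<bar>F t\<bar> \<le> B"
proof -
  have "bounded (F ` {a..b})" using assms compact_continuous_image compact_imp_bounded by blast
  then show ?thesis using that unfolding bounded_iff by fastforce
qed

lemma cont_meas_sub: fixes F :: "real \<Rightarrow> real"
  assumes "continuous_on {a..b} F" "x \<le> b" shows "F \<in> borel_measurable (lebesgue_on {a..x})"
  using assms by (intro continuous_imp_measurable_on_sets_lebesgue) (auto elim: continuous_on_subset)

lemma PP_diff_bound:
  fixes F1 F2 :: "real \<Rightarrow> real"
  assumes n: "n > 0" and c1: "continuous_on {a..b} F1" and c2: "continuous_on {a..b} F2"
    and d: "\<And>t. t \<in> {a..b} \<Longrightarrow> \<bar>F1 t - F2 t\<bar> \<le> \<delta>" and x: "x \<in> {a..b}"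
  shows "\<bar>PP a b n F1 x - PP a b n F2 x\<bar> \<le> \<delta> * ((b - a) powr n / n) / Gamma n"
proof -
  have e: "n - 1 > -1" using n by simp
  have ax: "a \<le> x" "x \<le> b" using x by auto
  obtain B1 where B1: "\<And>t. t \<in> {a..b} \<Longrightarrow> \<bar>F1 t\<bar> \<le> B1" using cont_bounded[OF c1] by blast
  obtain B2 where B2: "\<And>t. t \<in> {a..b} \<Longrightarrow> \<bar>F2 t\<bar> \<le> B2" using cont_bounded[OF c2] by blast
  have G: "Gamma n > 0" using n by (rule Gamma_real_pos)
  have "Jleft a (n - 1) F1 x - Jleft a (n - 1) F2 x = Jleft a (n - 1) (\<lambda>t. F1 t - F2 t) x"
    by (rule Jleft_diff[OF ax(1) e cont_meas_sub[OF c1 ax(2)] _ cont_meas_sub[OF c2 ax(2)], of B1 B2])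
       (use B1 B2 ax in auto)
  moreover have "\<bar>Jleft a (n - 1) (\<lambda>t. F1 t - F2 t) x\<bar> \<le> \<delta> * ((x - a) powr (n - 1 + 1) / (n - 1 + 1))"
  proof (rule Jleft_bound[OF ax(1) e])
    show "(\<lambda>t. F1 t - F2 t) \<in> borel_measurable (lebesgue_on {a..x})"
      using cont_meas_sub[OF c1 ax(2)] cont_meas_sub[OF c2 ax(2)] by measurable
    show "\<And>t. t \<in> {a..x} \<Longrightarrow> \<bar>F1 t - F2 t\<bar> \<le> \<delta>" using d ax by auto
  qed
  moreover have "(x - a) powr n \<le> (b - a) powr n" using ax n by (intro powr_mono2) auto
  moreover have "\<delta> \<ge> 0" using d[of a] ax by auto
  ultimately have "\<bar>Jleft a (n - 1) F1 x - Jleft a (n - 1) F2 x\<bar> \<le> \<delta> * ((b - a) powr n / n)"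
    using n by (smt (verit, best) divide_right_mono mult_left_mono)
  then have "\<bar>Jleft a (n - 1) F1 x - Jleft a (n - 1) F2 x\<bar> / Gamma n \<le> \<delta> * ((b - a) powr n / n) / Gamma n"
    using G by (intro divide_right_mono) auto
  moreover have "PP a b n F1 x - PP a b n F2 x = (Jleft a (n - 1) F1 x - Jleft a (n - 1) F2 x) / Gamma n"
    using x by (simp add: PP_def diff_divide_distrib)
  ultimately show ?thesis using G by (simp add: abs_divide)
qed

lemma PP_smooth:
  fixes G g :: "real \<Rightarrow> real"
  assumes ab: "a \<le> b" and n: "n > 0" and G0: "G a = 0"
    and gc: "continuous_on {a..b} g"
    and gm: "(\<lambda>t. indicator {a..b} t * g t) \<in> borel_measurable borel"
    and Gg: "\<And>s t. a \<le> s \<Longrightarrow> s \<le> t \<Longrightarrow> t \<le> b \<Longrightarrow> G t - G s = integral {s..t} g"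
  shows "\<And>x. x \<in> {a..b} \<Longrightarrow> PP a b n G x = integral {a..x} (\<lambda>s. (1 / Gamma n) * Jleft a (n - 1) g s)"
    and "(\<lambda>s. (1 / Gamma n) * Jleft a (n - 1) g s) integrable_on {a..b}"
proof -
  have e: "n - 1 > -1" using n by simp
  have key: "((\<lambda>s. (1 / Gamma n) * Jleft a (n - 1) g s) has_integral PP a b n G x) {a..x}" if x: "x \<in> {a..b}" for x
  proof -
    have ax: "a \<le> x" "x \<le> b" using x by auto
    have "{a..x} \<subseteq> {a..b}" using ax by auto
    then have "continuous_on {a..x} g" by (rule continuous_on_subset[OF gc])
    then have gi: "g absolutely_integrable_on {a..x}" by (rule absolutely_integrable_continuous_real)
    have vm: "(\<lambda>t. indicator {a..x} t * g t) \<in> borel_measurable borel"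
    proof -
      have "(\<lambda>t. indicator {a..x} t * (indicator {a..b} t * g t)) \<in> borel_measurable borel" using gm by measurable
      moreover have "(\<lambda>t. indicator {a..x} t * (indicator {a..b} t * g t)) = (\<lambda>t. indicator {a..x} t * g t)"
        using ax by (auto simp: indicator_def)
      ultimately show ?thesis by simp
    qed
    have "(Jleft a (n - 1) g has_integral integral {a..x} (\<lambda>t. g t * ((x - t) powr (n - 1 + 1) / (n - 1 + 1)))) {a..x}"
      using FT_unit[OF ax(1) e vm gi] .
    moreover have "integral {a..x} (\<lambda>t. g t * ((x - t) powr (n - 1 + 1) / (n - 1 + 1))) = Jleft a (n - 1) G x"
    proof -
      have "Jleft a (n - 1) G x = integral {a..x} (\<lambda>t. (x - t) powr n / n * g t)"
        by (rule JG_formula[where G=G and g=g and a=a and x=x and n=n, OF ax(1) n G0 gi]) (use Gg ax in auto)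
      moreover have "integral {a..x} (\<lambda>t. g t * ((x - t) powr (n - 1 + 1) / (n - 1 + 1))) = integral {a..x} (\<lambda>t. (x - t) powr n / n * g t)"
        by (rule integral_cong) simp
      ultimately show ?thesis by simp
    qed
    ultimately have "(Jleft a (n - 1) g has_integral Jleft a (n - 1) G x) {a..x}" by simp
    from has_integral_mult_right[OF this, of "1 / Gamma n"]
    show ?thesis unfolding PP_def using x by simp
  qed
  show "\<And>x. x \<in> {a..b} \<Longrightarrow> PP a b n G x = integral {a..x} (\<lambda>s. (1 / Gamma n) * Jleft a (n - 1) g s)"
    using key integral_unique by metis
  show "(\<lambda>s. (1 / Gamma n) * Jleft a (n - 1) g s) integrable_on {a..b}"
    using has_integral_integrable[OF key[of b]] ab by simp
qed

lemma smooth_approx: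
  fixes F :: "real \<Rightarrow> real"
  assumes Fc: "continuous_on {a..b} F" and F0: "F a = 0" and ab: "a \<le> b"
  obtains G g where "\<And>k. G k a = 0" "\<And>k. continuous_on UNIV (g k)"
    "\<And>k s t. s \<le> t \<Longrightarrow> G k t - G k s = integral {s..t} (g k)"
    "\<And>k t. t \<in> {a..b} \<Longrightarrow> \<bar>F t - G k t\<bar> \<le> 2 / Suc k"
    "\<And>k. real_polynomial_function (G k)"
proof -
  obtain p where p: "\<And>k. real_polynomial_function (p k)" "\<And>k x. x \<in> {a..b} \<Longrightarrow> \<bar>F x - p k x\<bar> < 1 / Suc k"
    using poly_approx_seq[OF Fc] by metis
  define G where "G k t = p k t - p k a" for k t
  have Gp: "real_polynomial_function (G k)" for k
    unfolding G_def using p(1) by (intro real_polynomial_function_diff) auto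
  have "\<forall>k. \<exists>g. continuous_on UNIV g \<and> (\<forall>s t. s \<le> t \<longrightarrow> G k t - G k s = integral {s..t} g)"
  proof
    fix k
    obtain g where "continuous_on UNIV g" "\<And>s t. s \<le> t \<Longrightarrow> G k t - G k s = integral {s..t} g"
      using poly_deriv_facts[OF Gp[of k]] by metis
    then show "\<exists>g. continuous_on UNIV g \<and> (\<forall>s t. s \<le> t \<longrightarrow> G k t - G k s = integral {s..t} g)" by blast
  qed
  then obtain g where g: "\<And>k. continuous_on UNIV (g k)" "\<And>k s t. s \<le> t \<Longrightarrow> G k t - G k s = integral {s..t} (g k)"
    by metis
  have Gb: "\<bar>F t - G k t\<bar> \<le> 2 / Suc k" if t: "t \<in> {a..b}" for k t
  proof -
    have 1: "\<bar>F a - p k a\<bar> < 1 / Suc k" using p(2)[of a k] ab by auto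
    have 2: "\<bar>F t - p k t\<bar> < 1 / Suc k" using p(2)[OF t] .
    have "\<bar>F t - G k t\<bar> \<le> \<bar>F t - p k t\<bar> + \<bar>F a - p k a\<bar>" unfolding G_def using F0 by simp
    then show ?thesis using 1 2 by simp
  qed
  have G0: "G k a = 0" for k by (simp add: G_def)
  show ?thesis by (rule that[OF G0 g(1) g(2) Gb Gp])
qed




lemma RL_L1_prim:
  fixes g :: "real \<Rightarrow> real"
  assumes ab: "a \<le> b" and n: "n > 0" and gi: "g absolutely_integrable_on {a..b}"
  shows "RL_left_L1 a n g integrable_on {a..b}"
    and "\<And>x. x \<in> {a..b} \<Longrightarrow> integral {a..x} (RL_left_L1 a n g) = PP a b n (\<lambda>y. integral {a..y} g) x"
proof -
  have e: "n - 1 > -1" using n by simp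
  have "integrable lebesgue (\<lambda>x. indicator {a..b} x *\<^sub>R g x)" using gi unfolding set_integrable_def by simp
  then have "(\<lambda>x. indicator {a..b} x *\<^sub>R g x) \<in> borel_measurable lebesgue" by (rule borel_measurable_integrable)
  then obtain g' where g': "g' \<in> borel_measurable lborel" "AE x in lborel. indicator {a..b} x *\<^sub>R g x = g' x"
    using completion_ex_borel_measurable_real by blast
  obtain N where N: "\<And>x. x \<in> space lborel - N \<Longrightarrow> indicator {a..b} x *\<^sub>R g x = g' x" "N \<in> null_sets lborel"
    by (rule AE_E3[OF g'(2)]) blast
  have negN: "negligible N" by (rule null_lborel_negligible[OF N(2)])
  define g2 where "g2 x = indicator {a..b} x * g' x" for x
  have g2g: "g2 x = g x" if "x \<in> {a..b} - N" for x using N(1)[of x] that by (simp add: g2_def)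
  have g2m: "(\<lambda>t. indicator {c..d} t * g2 t) \<in> borel_measurable borel" for c d :: real
  proof -
    have [measurable]: "g' \<in> borel_measurable borel" using g'(1) by simp
    show ?thesis unfolding g2_def by measurable
  qed
  have g2i: "g2 absolutely_integrable_on {a..b}" by (rule absolutely_integrable_spike[OF gi negN]) (use g2g in auto)
  have RLeq: "RL_left_L1 a n g s = (1 / Gamma n) * Jleft a (n - 1) g2 s" if s: "s \<in> {a..b}" for s
  proof -
    have "integral {a..s} (\<lambda>t. rl_kernel n (s - t) * g t) = integral {a..s} (\<lambda>t. (s - t) powr (n - 1) * g t)"
      by (rule rl_left_spike)
    also have "\<dots> = integral {a..s} (\<lambda>t. (s - t) powr (n - 1) * g2 t)"
      by (rule integral_spike[OF negN]) (use g2g s in auto)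
    finally show ?thesis unfolding RL_left_L1_def Jleft_def by simp
  qed
  have key: "(RL_left_L1 a n g has_integral PP a b n (\<lambda>y. integral {a..y} g) x) {a..x}" if x: "x \<in> {a..b}" for x
  proof -
    have ax: "a \<le> x" "x \<le> b" using x by auto
    have sub: "{a..x} \<subseteq> {a..b}" using ax by auto
    have g2ix: "g2 absolutely_integrable_on {a..x}" by (rule absolutely_integrable_on_subinterval[OF g2i sub])
    have gix: "g integrable_on {a..x}" by (rule integrable_on_subinterval[OF set_lebesgue_integral_eq_integral(1)[OF gi] sub])
    have FT: "(Jleft a (n - 1) g2 has_integral integral {a..x} (\<lambda>t. g2 t * ((x - t) powr (n - 1 + 1) / (n - 1 + 1)))) {a..x}"
      by (rule FT_unit[OF ax(1) e g2m g2ix])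
    have Gg: "integral {a..t} g - integral {a..s} g = integral {s..t} g2" if "a \<le> s" "s \<le> t" "t \<le> x" for s t
    proof -
      have "integral {a..s} g + integral {s..t} g = integral {a..t} g"
        by (rule Henstock_Kurzweil_Integration.integral_combine) (use that integrable_on_subinterval[OF gix] in auto)
      moreover have "integral {s..t} g = integral {s..t} g2"
        by (rule integral_spike[OF negN]) (use g2g that ax in auto)
      ultimately show ?thesis by simp
    qed
    have JG: "Jleft a (n - 1) (\<lambda>y. integral {a..y} g) x = integral {a..x} (\<lambda>t. (x - t) powr n / n * g2 t)"
      by (rule JG_formula[where G="\<lambda>y. integral {a..y} g" and g=g2 and a=a and x=x and n=n, OF ax(1) n _ g2ix])
         (use Gg in auto)
    have C1: "integral {a..x} (\<lambda>t. g2 t * ((x - t) powr (n - 1 + 1) / (n - 1 + 1))) = integral {a..x} (\<lambda>t. (x - t) powr n / n * g2 t)"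
      by (rule integral_cong) simp
    have "(Jleft a (n - 1) g2 has_integral Jleft a (n - 1) (\<lambda>y. integral {a..y} g) x) {a..x}"
      using FT unfolding C1 JG[symmetric] .
    from has_integral_mult_right[OF this, of "1 / Gamma n"]
    have "((\<lambda>s. (1 / Gamma n) * Jleft a (n - 1) g2 s) has_integral PP a b n (\<lambda>y. integral {a..y} g) x) {a..x}"
      unfolding PP_def using x by simp
    moreover have eqv: "\<And>s. s \<in> {a..x} - {} \<Longrightarrow> RL_left_L1 a n g s = 1 / Gamma n * Jleft a (n - 1) g2 s"
      using RLeq sub by auto
    ultimately show ?thesis
      using has_integral_spike_eq[where S="{}" and T="{a..x}" and f="\<lambda>s. 1 / Gamma n * Jleft a (n - 1) g2 s" and g="RL_left_L1 a n g", OF negligible_empty eqv]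
      by simp
  qed
  show "RL_left_L1 a n g integrable_on {a..b}" using has_integral_integrable[OF key[of b]] ab by simp
  show "\<And>x. x \<in> {a..b} \<Longrightarrow> integral {a..x} (RL_left_L1 a n g) = PP a b n (\<lambda>y. integral {a..y} g) x"
    using key integral_unique by metis
qed

lemma alex_RL_bound:
  fixes g F :: "real \<Rightarrow> real"
  assumes ab: "a \<le> b" and n: "n > 0" and Fc: "continuous_on {a..b} F" and gi: "g absolutely_integrable_on {a..b}"
  shows "alex_dist_L1 a b (RL_left_L1 a n g) (PP a b n F) \<le> ((b - a) powr n / n) / Gamma n * alex_dist_L1 a b g F"
    and "0 \<le> alex_dist_L1 a b (RL_left_L1 a n g) (PP a b n F)"
proof -
  define C where "C = ((b - a) powr n / n) / Gamma n"
  define Gg where "Gg y = integral {a..y} g" for y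
  have gI: "g integrable_on {a..b}" by (rule set_lebesgue_integral_eq_integral(1)[OF gi])
  have Ggc: "continuous_on {a..b} Gg" unfolding Gg_def by (rule indefinite_integral_continuous_1[OF gI])
  have bdd: "bdd_above ((\<lambda>x. \<bar>integral {a..x} g - F x\<bar>) ` {a..b})"
  proof -
    have "continuous_on {a..b} (\<lambda>x. \<bar>Gg x - F x\<bar>)" using Ggc Fc by (intro continuous_intros)
    then have "bounded ((\<lambda>x. \<bar>Gg x - F x\<bar>) ` {a..b})" using compact_continuous_image compact_imp_bounded by blast
    then show ?thesis unfolding Gg_def by (rule bounded_imp_bdd_above)
  qed
  have pt: "\<bar>Gg x - F x\<bar> \<le> alex_dist_L1 a b g F" if "x \<in> {a..b}" for x
    unfolding alex_dist_L1_def Gg_def by (rule cSUP_upper[OF that bdd])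
  have pt2: "\<bar>integral {a..x} (RL_left_L1 a n g) - PP a b n F x\<bar> \<le> C * alex_dist_L1 a b g F" if x: "x \<in> {a..b}" for x
  proof -
    have "integral {a..x} (RL_left_L1 a n g) = PP a b n Gg x" using RL_L1_prim(2)[OF ab n gi x] unfolding Gg_def .
    moreover have "\<bar>PP a b n Gg x - PP a b n F x\<bar> \<le> alex_dist_L1 a b g F * ((b - a) powr n / n) / Gamma n"
      by (rule PP_diff_bound[OF n Ggc Fc pt x])
    ultimately show ?thesis by (simp add: C_def mult.commute)
  qed
  have ne: "{a..b} \<noteq> {}" using ab by simp
  show "alex_dist_L1 a b (RL_left_L1 a n g) (PP a b n F) \<le> ((b - a) powr n / n) / Gamma n * alex_dist_L1 a b g F"
    unfolding alex_dist_L1_def[of a b "RL_left_L1 a n g"] C_def[symmetric]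
    by (rule cSUP_least[OF ne pt2])
  have bdd2: "bdd_above ((\<lambda>x. \<bar>integral {a..x} (RL_left_L1 a n g) - PP a b n F x\<bar>) ` {a..b})"
    unfolding bdd_above_def using pt2 by blast
  show "0 \<le> alex_dist_L1 a b (RL_left_L1 a n g) (PP a b n F)"
    unfolding alex_dist_L1_def by (rule cSUP_upper2[OF bdd2, of a]) (use ab in auto)
qed



lemma inv_Suc_tendsto: "(\<lambda>k. c / real (Suc k)) \<longlonglongrightarrow> 0"
  using tendsto_mult_right_zero[OF LIMSEQ_inverse_real_of_nat, of c] by (simp add: divide_inverse)

lemma smooth_facts:
  fixes g :: "real \<Rightarrow> real"
  assumes "continuous_on UNIV g"
  shows "continuous_on {a..b} g" "(\<lambda>t. indicator {a..b} t * g t) \<in> borel_measurable borel"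
    "g absolutely_integrable_on {a..b}"
proof -
  show gc: "continuous_on {a..b} g" using assms continuous_on_subset by blast
  have [measurable]: "g \<in> borel_measurable borel" using assms by (rule borel_measurable_continuous_onI)
  show "(\<lambda>t. indicator {a..b} t * g t) \<in> borel_measurable borel" by measurable
  show "g absolutely_integrable_on {a..b}" by (rule absolutely_integrable_continuous_real[OF gc])
qed

lemma PP_cont:
  fixes F :: "real \<Rightarrow> real"
  assumes ab: "a \<le> b" and n: "n > 0" and Fc: "continuous_on {a..b} F" and F0: "F a = 0"
  shows "continuous_on {a..b} (PP a b n F)"
proof -
  obtain G g where G0: "\<And>k. G k a = 0" and gc: "\<And>k. continuous_on UNIV (g k)"
    and Gg: "\<And>k s t. s \<le> t \<Longrightarrow> G k t - G k s = integral {s..t} (g k)"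
    and GF: "\<And>k t. t \<in> {a..b} \<Longrightarrow> \<bar>F t - G k t\<bar> \<le> 2 / Suc k"
    and Gp: "\<And>k. real_polynomial_function (G k)"
    using smooth_approx[OF Fc F0 ab] by metis
  have Gc: "continuous_on {a..b} (G k)" for k
    using Gp[of k] continuous_on_polymonial_function real_polynomial_function_eq by blast
  have PPc: "continuous_on {a..b} (PP a b n (G k))" for k
  proof -
    note sf = smooth_facts[OF gc[of k], of a b]
    have rep: "\<And>x. x \<in> {a..b} \<Longrightarrow> PP a b n (G k) x = integral {a..x} (\<lambda>s. (1 / Gamma n) * Jleft a (n - 1) (g k) s)"
      by (rule PP_smooth(1)[where G="G k" and g="g k", OF ab n G0[of k] sf(1) sf(2)]) (use Gg in auto)
    have int: "(\<lambda>s. (1 / Gamma n) * Jleft a (n - 1) (g k) s) integrable_on {a..b}"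
      by (rule PP_smooth(2)[where G="G k" and g="g k", OF ab n G0[of k] sf(1) sf(2)]) (use Gg in auto)
    show ?thesis
      by (rule continuous_on_eq[OF indefinite_integral_continuous_1[OF int]]) (use rep in auto)
  qed
  define C where "C = ((b - a) powr n / n) / Gamma n"
  have bnd: "\<bar>PP a b n (G k) x - PP a b n F x\<bar> \<le> 2 * C / Suc k" if x: "x \<in> {a..b}" for k x
  proof -
    have "\<bar>PP a b n (G k) x - PP a b n F x\<bar> \<le> 2 / Suc k * ((b - a) powr n / n) / Gamma n"
      by (rule PP_diff_bound[OF n Gc Fc _ x]) (use GF in \<open>auto simp: abs_minus_commute\<close>)
    moreover have "2 / Suc k * ((b - a) powr n / n) / Gamma n = 2 * C / Suc k" by (simp add: C_def)
    ultimately show ?thesis by simp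
  qed
  have "uniform_limit {a..b} (\<lambda>k. PP a b n (G k)) (PP a b n F) sequentially"
  proof (rule uniform_limitI)
    fix e :: real assume e: "e > 0"
    obtain N where N: "\<And>k. k \<ge> N \<Longrightarrow> 2 * C / Suc k < e" using inv_Suc_small[OF e, of "2 * C"] by auto
    show "\<forall>\<^sub>F k in sequentially. \<forall>x\<in>{a..b}. dist (PP a b n (G k) x) (PP a b n F x) < e"
      unfolding eventually_sequentially
    proof (intro exI allI impI ballI)
      fix k x assume k: "N \<le> k" and x: "x \<in> {a..b}"
      show "dist (PP a b n (G k) x) (PP a b n F x) < e"
        using bnd[OF x, of k] N[OF k] unfolding dist_real_def by linarith
    qed
  qed
  then show ?thesis by (rule uniform_limit_theorem[rotated]) (use PPc in auto)
qed

lemma alex_smooth: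
  fixes F :: "real \<Rightarrow> real"
  assumes ab: "a \<le> b" and G0: "G a = 0" and Gg: "\<And>s t. s \<le> t \<Longrightarrow> G t - G s = integral {s..t} g"
    and GF: "\<And>t. t \<in> {a..b} \<Longrightarrow> \<bar>F t - G t\<bar> \<le> d"
  shows "alex_dist_L1 a b g F \<le> d" "0 \<le> alex_dist_L1 a b g F"
proof -
  have pt: "\<bar>integral {a..x} g - F x\<bar> \<le> d" if "x \<in> {a..b}" for x
    using Gg[of a x] GF[OF that] G0 that by (auto simp: abs_minus_commute)
  have ne: "{a..b} \<noteq> {}" using ab by simp
  show "alex_dist_L1 a b g F \<le> d" unfolding alex_dist_L1_def by (rule cSUP_least[OF ne pt])
  have bdd: "bdd_above ((\<lambda>x. \<bar>integral {a..x} g - F x\<bar>) ` {a..b})" unfolding bdd_above_def using pt by blast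
  show "0 \<le> alex_dist_L1 a b g F" unfolding alex_dist_L1_def by (rule cSUP_upper2[OF bdd, of a]) (use ab in auto)
qed

lemma RL_left_prim_eq:
  fixes F :: "real \<Rightarrow> real"
  assumes ab: "a \<le> b" and n: "n > 0" and Fc: "continuous_on {a..b} F" and F0: "F a = 0"
  shows "RL_left_prim a b n F = PP a b n F"
proof -
  define C where "C = ((b - a) powr n / n) / Gamma n"
  have conv: "(\<lambda>k. alex_dist_L1 a b (RL_left_L1 a n (fs k)) (PP a b n F)) \<longlonglongrightarrow> 0"
    if fs: "\<And>k. fs k absolutely_integrable_on {a..b}" "(\<lambda>k. alex_dist_L1 a b (fs k) F) \<longlonglongrightarrow> 0" for fs
  proof (rule real_tendsto_sandwich)
    show "\<forall>\<^sub>F k in sequentially. 0 \<le> alex_dist_L1 a b (RL_left_L1 a n (fs k)) (PP a b n F)"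
      using alex_RL_bound(2)[OF ab n Fc fs(1)] by simp
    show "\<forall>\<^sub>F k in sequentially. alex_dist_L1 a b (RL_left_L1 a n (fs k)) (PP a b n F) \<le> C * alex_dist_L1 a b (fs k) F"
      using alex_RL_bound(1)[OF ab n Fc fs(1)] unfolding C_def by simp
    show "(\<lambda>k. 0) \<longlonglongrightarrow> (0::real)" by simp
    show "(\<lambda>k. C * alex_dist_L1 a b (fs k) F) \<longlonglongrightarrow> 0" by (rule tendsto_mult_right_zero[OF fs(2)])
  qed
  have PPc: "continuous_on {a..b} (PP a b n F)" by (rule PP_cont[OF ab n Fc F0])
  have PPa: "PP a b n F a = 0" using ab by (simp add: PP_def Jleft_def)
  have PPo: "\<forall>x. x \<notin> {a..b} \<longrightarrow> PP a b n F x = 0" by (simp add: PP_def)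
  obtain G g where G0: "\<And>k. G k a = 0" and gc: "\<And>k. continuous_on UNIV (g k)"
    and Gg: "\<And>k s t. s \<le> t \<Longrightarrow> G k t - G k s = integral {s..t} (g k)"
    and GF: "\<And>k t. t \<in> {a..b} \<Longrightarrow> \<bar>F t - G k t\<bar> \<le> 2 / Suc k"
    and Gp: "\<And>k. real_polynomial_function (G k)"
    using smooth_approx[OF Fc F0 ab] by metis
  have gi: "g k absolutely_integrable_on {a..b}" for k using smooth_facts(3)[OF gc[of k]] .
  have galex: "(\<lambda>k. alex_dist_L1 a b (g k) F) \<longlonglongrightarrow> 0"
  proof (rule real_tendsto_sandwich)
    show "\<forall>\<^sub>F k in sequentially. 0 \<le> alex_dist_L1 a b (g k) F"
      using alex_smooth(2)[OF ab G0 Gg GF] by simp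
    show "\<forall>\<^sub>F k in sequentially. alex_dist_L1 a b (g k) F \<le> 2 / Suc k"
      using alex_smooth(1)[OF ab G0 Gg GF] by simp
    show "(\<lambda>k. 0) \<longlonglongrightarrow> (0::real)" by simp
    show "(\<lambda>k. 2 / real (Suc k)) \<longlonglongrightarrow> 0" by (rule inv_Suc_tendsto)
  qed
  show ?thesis
    unfolding RL_left_prim_def
  proof (rule the_equality)
    show "continuous_on {a..b} (PP a b n F) \<and> PP a b n F a = 0 \<and> (\<forall>x. x \<notin> {a..b} \<longrightarrow> PP a b n F x = 0) \<and>
      (\<forall>fs. (\<forall>k. fs k absolutely_integrable_on {a..b}) \<and> (\<lambda>k. alex_dist_L1 a b (fs k) F) \<longlonglongrightarrow> 0 \<longrightarrow>
        (\<lambda>k. alex_dist_L1 a b (RL_left_L1 a n (fs k)) (PP a b n F)) \<longlonglongrightarrow> 0)"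
      using PPc PPa PPo conv by blast
  next
    fix P assume "continuous_on {a..b} P \<and> P a = 0 \<and> (\<forall>x. x \<notin> {a..b} \<longrightarrow> P x = 0) \<and>
      (\<forall>fs. (\<forall>k. fs k absolutely_integrable_on {a..b}) \<and> (\<lambda>k. alex_dist_L1 a b (fs k) F) \<longlonglongrightarrow> 0 \<longrightarrow>
        (\<lambda>k. alex_dist_L1 a b (RL_left_L1 a n (fs k)) P) \<longlonglongrightarrow> 0)"
    then have Pc: "continuous_on {a..b} P" and Po: "\<forall>x. x \<notin> {a..b} \<longrightarrow> P x = 0"
      and Pl: "(\<lambda>k. alex_dist_L1 a b (RL_left_L1 a n (g k)) P) \<longlonglongrightarrow> 0"
      using gi galex by blast+
    have Ql: "(\<lambda>k. alex_dist_L1 a b (RL_left_L1 a n (g k)) (PP a b n F)) \<longlonglongrightarrow> 0"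
      by (rule conv[OF gi galex])
    have Qc: "continuous_on {a..b} (\<lambda>x. integral {a..x} (RL_left_L1 a n (g k)))" for k
      by (rule indefinite_integral_continuous_1[OF RL_L1_prim(1)[OF ab n gi]])
    have bddA: "bdd_above ((\<lambda>x. \<bar>integral {a..x} (RL_left_L1 a n (g k)) - Q x\<bar>) ` {a..b})"
      if "continuous_on {a..b} Q" for k Q
    proof -
      have "continuous_on {a..b} (\<lambda>x. \<bar>integral {a..x} (RL_left_L1 a n (g k)) - Q x\<bar>)"
        using Qc[of k] that by (intro continuous_intros)
      then have "bounded ((\<lambda>x. \<bar>integral {a..x} (RL_left_L1 a n (g k)) - Q x\<bar>) ` {a..b})"
        using compact_continuous_image compact_imp_bounded by blast
      then show ?thesis by (rule bounded_imp_bdd_above)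
    qed
    have eq_in: "P x = PP a b n F x" if x: "x \<in> {a..b}" for x
    proof -
      have le: "\<bar>P x - PP a b n F x\<bar> \<le> alex_dist_L1 a b (RL_left_L1 a n (g k)) P + alex_dist_L1 a b (RL_left_L1 a n (g k)) (PP a b n F)" for k
      proof -
        have 1: "\<bar>integral {a..x} (RL_left_L1 a n (g k)) - P x\<bar> \<le> alex_dist_L1 a b (RL_left_L1 a n (g k)) P"
          unfolding alex_dist_L1_def by (rule cSUP_upper[OF x bddA[OF Pc]])
        have 2: "\<bar>integral {a..x} (RL_left_L1 a n (g k)) - PP a b n F x\<bar> \<le> alex_dist_L1 a b (RL_left_L1 a n (g k)) (PP a b n F)"
          unfolding alex_dist_L1_def by (rule cSUP_upper[OF x bddA[OF PPc]])
        show ?thesis using 1 2 by linarith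
      qed
      have "\<bar>P x - PP a b n F x\<bar> \<le> 0"
        by (rule tendsto_le[OF trivial_limit_sequentially tendsto_add[OF Pl Ql, simplified] tendsto_const])
           (use le in simp)
      then show ?thesis by simp
    qed
    show "P = PP a b n F"
    proof
      fix x show "P x = PP a b n F x"
        using eq_in[of x] Po PPo by (cases "x \<in> {a..b}") auto
    qed
  qed
qed



lemma lim_by_bound:
  fixes X Y :: "nat \<Rightarrow> real"
  assumes "\<And>k. \<bar>X k - x\<bar> \<le> Y k" "Y \<longlonglongrightarrow> 0"
  shows "X \<longlonglongrightarrow> x"
proof (rule LIM_zero_cancel)
  show "(\<lambda>k. X k - x) \<longlonglongrightarrow> 0"
    by (rule Lim_null_comparison[OF _ assms(2)]) (use assms(1) in simp)
qed

lemma RL_left_lip: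
  fixes F1 F2 :: "real \<Rightarrow> real"
  assumes n: "1 \<le> n" and x: "x \<in> {a..b}" and c1: "continuous_on {a..b} F1" and c2: "continuous_on {a..b} F2"
    and d: "\<And>t. t \<in> {a..b} \<Longrightarrow> \<bar>F1 t - F2 t\<bar> \<le> \<delta>"
  shows "\<bar>RL_left a n F1 x - RL_left a n F2 x\<bar> \<le> \<delta> * ((2 + (b - a) powr (n - 1)) / Gamma n)"
proof -
  have ax: "a \<le> x" "x \<le> b" using x by auto
  have G: "Gamma n > 0" using n by (intro Gamma_real_pos) auto
  have d0: "\<delta> \<ge> 0" using d[of a] ax by auto
  define k where "k t = rl_kernel n (x - t)" for t
  have kanti: "k t \<le> k s" if "a \<le> s" "s \<le> t" "t \<le> x" for s t
  proof (cases "n = 1")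
    case True then show ?thesis by (simp add: k_def rl_kernel_def)
  next
    case False
    then have "(x - t) powr (n - 1) \<le> (x - s) powr (n - 1)" using n that by (intro powr_mono2) auto
    then show ?thesis using False by (simp add: k_def rl_kernel_def)
  qed
  have Mk: "bv_le k a x (k a - k x)" by (rule antimono_bv) (use kanti in auto)
  have bvk: "bounded_var k a x" using Mk bounded_var_bv_le by blast
  have sub: "{a..x} \<subseteq> {a..b}" using ax by auto
  have c1x: "continuous_on {a..x} F1" using continuous_on_subset[OF c1 sub] .
  have c2x: "continuous_on {a..x} F2" using continuous_on_subset[OF c2 sub] .
  obtain I1 where I1: "has_RS_integral F1 k a x I1" using RS_exists[OF ax(1) c1x bvk] by blast
  obtain I2 where I2: "has_RS_integral F2 k a x I2" using RS_exists[OF ax(1) c2x bvk] by blast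
  have "\<bar>I1 - I2\<bar> \<le> \<delta> * (k a - k x)" by (rule RS_diff_bound[OF ax(1) I1 I2 Mk]) (use d sub in auto)
  moreover have kx: "\<bar>k x\<bar> \<le> 1" by (simp add: k_def rl_kernel_def)
  moreover have ka: "k a \<le> 1 + (b - a) powr (n - 1)"
  proof (cases "n = 1")
    case True then show ?thesis by (simp add: k_def rl_kernel_def)
  next
    case False
    then have "(x - a) powr (n - 1) \<le> (b - a) powr (n - 1)" using n ax by (intro powr_mono2) auto
    then show ?thesis using False by (simp add: k_def rl_kernel_def)
  qed
  moreover have "k x \<ge> 0" by (simp add: k_def rl_kernel_def)
  ultimately have B: "\<bar>I1 - I2\<bar> \<le> \<delta> * (1 + (b - a) powr (n - 1))"
    using d0 by (smt (verit, best) mult_left_mono)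
  have "RL_left a n F1 x - RL_left a n F2 x = ((F1 x - F2 x) * k x - (I1 - I2)) / Gamma n"
    unfolding RL_left_def hk_pair_def k_def[symmetric]
    using RS_integral_eqI[OF ax(1) I1] RS_integral_eqI[OF ax(1) I2] G by (simp add: field_simps)
  moreover have "\<bar>(F1 x - F2 x) * k x - (I1 - I2)\<bar> \<le> \<delta> * (2 + (b - a) powr (n - 1))"
  proof -
    have "\<bar>(F1 x - F2 x) * k x\<bar> \<le> \<delta> * 1"
      unfolding abs_mult using d[OF x] kx d0 by (intro mult_mono) auto
    then show ?thesis using B by (simp add: algebra_simps abs_if split: if_splits)
  qed
  ultimately show ?thesis using G by (simp add: abs_divide divide_right_mono)
qed

lemma RL_left_zero: "RL_left a n (\<lambda>t. 0) x = 0" if "a \<le> x"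
proof -
  have "has_RS_integral (\<lambda>t. 0) g a x 0" for g
    unfolding has_RS_fine rs_sum_def by (auto intro: exI[of _ 1])
  then show ?thesis unfolding RL_left_def hk_pair_def using RS_integral_eqI[OF that] by simp
qed

lemma main_limits:
  fixes F \<phi> :: "real \<Rightarrow> real"
  assumes ab: "a \<le> b" and n: "0 < n"
    and Fc: "continuous_on {a..b} F" and F0: "F a = 0"
    and bv: "bounded_var \<phi> a b"
  shows "(if 1 \<le> n then integral {a..b} (\<lambda>x. \<phi> x * RL_left a n F x)
          else hk_pair (RL_left_prim a b n F) \<phi> a b)
         = hk_pair F (RL_right b n \<phi>) a b"
proof -
  obtain G g where G0: "\<And>k. G k a = 0" and gc: "\<And>k. continuous_on UNIV (g k)"
    and Gg: "\<And>k s t. s \<le> t \<Longrightarrow> G k t - G k s = integral {s..t} (g k)"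
    and GF: "\<And>k t. t \<in> {a..b} \<Longrightarrow> \<bar>F t - G k t\<bar> \<le> 2 / Suc k"
    and Gp: "\<And>k. real_polynomial_function (G k)"
    using smooth_approx[OF Fc F0 ab] by metis
  have Gc: "continuous_on {a..b} (G k)" for k
    using Gp[of k] continuous_on_polymonial_function real_polynomial_function_eq by blast
  note sf = smooth_facts[OF gc, of a b]
  have Gam: "Gamma n > 0" using n by (rule Gamma_real_pos)
  define \<psi> where "\<psi> = RL_right b n \<phi>"
  define L where "L k = (1 / Gamma n) * integral {a..b} (\<lambda>x. \<phi> x * Jleft a (n - 1) (g k) x)" for k
  have RSG: "RS_integral (G k) \<psi> a b = - L k" for k
    unfolding \<psi>_def L_def
    by (rule rhs_smooth(1)[where G="G k" and g="g k", OF ab n bv G0[of k] sf(1) sf(2)]) (use Gg in auto)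
  have phiJint: "(\<lambda>x. \<phi> x * Jleft a (n - 1) (g k) x) integrable_on {a..b}" for k
    by (rule rhs_smooth(2)[where G="G k" and g="g k", OF ab n bv G0[of k] sf(1) sf(2)]) (use Gg in auto)
  obtain M\<phi> where M\<phi>: "bv_le \<phi> a b M\<phi>" using bv bounded_var_bv_le by blast
  have M\<phi>0: "M\<phi> \<ge> 0" using bv_le_nonneg[OF M\<phi> ab] .
  have bvpsi: "bounded_var \<psi> a b" unfolding \<psi>_def by (rule RL_right_bv[OF ab n bv])
  obtain M\<psi> where M\<psi>: "bv_le \<psi> a b M\<psi>" using bvpsi bounded_var_bv_le by blast
  have RHS: "L \<longlonglongrightarrow> hk_pair F \<psi> a b"
  proof -
    obtain I where I: "has_RS_integral F \<psi> a b I" using RS_exists[OF ab Fc bvpsi] by blast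
    have hk: "hk_pair F \<psi> a b = - I"
      unfolding hk_pair_def \<psi>_def using RS_integral_eqI[OF ab I] RL_right_b unfolding \<psi>_def by simp
    have "\<bar>L k - (- I)\<bar> \<le> 2 / Suc k * M\<psi>" for k
    proof -
      obtain J where J: "has_RS_integral (G k) \<psi> a b J" using RS_exists[OF ab Gc bvpsi] by blast
      have "\<bar>J - I\<bar> \<le> 2 / Suc k * M\<psi>"
        by (rule RS_diff_bound[OF ab J I M\<psi>]) (use GF in \<open>auto simp: abs_minus_commute\<close>)
      moreover have "L k = - J" using RSG[of k] RS_integral_eqI[OF ab J] by simp
      ultimately show ?thesis by (simp add: abs_minus_commute)
    qed
    moreover have "(\<lambda>k. 2 / real (Suc k) * M\<psi>) \<longlonglongrightarrow> 0" by (rule tendsto_mult_left_zero[OF inv_Suc_tendsto])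
    ultimately show ?thesis unfolding hk by (rule lim_by_bound)
  qed
  have LHS: "L \<longlonglongrightarrow> (if 1 \<le> n then integral {a..b} (\<lambda>x. \<phi> x * RL_left a n F x)
          else hk_pair (RL_left_prim a b n F) \<phi> a b)"
  proof (cases "1 \<le> n")
    case True
    define c where "c = (2 + (b - a) powr (n - 1)) / Gamma n"
    have c0: "c \<ge> 0" unfolding c_def using Gam by simp
    obtain BF where BF: "\<And>t. t \<in> {a..b} \<Longrightarrow> \<bar>F t\<bar> \<le> BF" using cont_bounded[OF Fc] by blast
    have B\<phi>: "\<And>x. x \<in> {a..b} \<Longrightarrow> \<bar>\<phi> x\<bar> \<le> \<bar>\<phi> a\<bar> + M\<phi>" using bv_bounded[OF M\<phi>] by auto
    define f where "f k x = \<phi> x * RL_left a n (G k) x" for k x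
    have feq: "f k x = (1 / Gamma n) * (\<phi> x * Jleft a (n - 1) (g k) x)" if x: "x \<in> {a..b}" for k x
    proof -
      have ax: "a \<le> x" "x \<le> b" using x by auto
      have "RL_left a n (G k) x = (1 / Gamma n) * Jleft a (n - 1) (g k) x"
        by (rule RL_left_smooth[where G="G k" and g="g k", OF True ax(1) G0[of k]])
           (use smooth_facts(3)[OF gc[of k], of a x] Gg in auto)
      then show ?thesis unfolding f_def by simp
    qed
    have fint: "f k integrable_on {a..b}" for k
    proof -
      have "(\<lambda>x. (1 / Gamma n) * (\<phi> x * Jleft a (n - 1) (g k) x)) integrable_on {a..b}"
        by (rule integrable_on_mult_right[OF phiJint])
      then show ?thesis by (rule integrable_eq) (use feq in auto)
    qed
    have fL: "integral {a..b} (f k) = L k" for k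
    proof -
      have "integral {a..b} (f k) = integral {a..b} (\<lambda>x. (1 / Gamma n) * (\<phi> x * Jleft a (n - 1) (g k) x))"
        by (rule integral_cong) (use feq in auto)
      then show ?thesis unfolding L_def by simp
    qed
    have zc: "continuous_on {a..b} (\<lambda>t. 0::real)" by simp
    have RLb: "\<bar>RL_left a n (G k) x\<bar> \<le> (BF + 2) * c" if x: "x \<in> {a..b}" for k x
    proof -
      have "\<bar>RL_left a n (G k) x - RL_left a n (\<lambda>t. 0) x\<bar> \<le> (BF + 2) * c"
        unfolding c_def
      proof (rule RL_left_lip[OF True x Gc zc])
        fix t assume t: "t \<in> {a..b}"
        have "\<bar>G k t\<bar> \<le> \<bar>F t\<bar> + \<bar>F t - G k t\<bar>" by linarith
        moreover have "2 / real (Suc k) \<le> 2" by (simp add: field_simps)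
        ultimately show "\<bar>G k t - 0\<bar> \<le> BF + 2" using BF[OF t] GF[OF t, of k] by simp
      qed
      then show ?thesis using RL_left_zero[of a x n] x by simp
    qed
    have fb: "norm (f k x) \<le> (\<bar>\<phi> a\<bar> + M\<phi>) * ((BF + 2) * c)" if x: "x \<in> {a..b}" for k x
      unfolding f_def real_norm_def abs_mult using B\<phi>[OF x] RLb[OF x] by (intro mult_mono) auto
    have fconv: "(\<lambda>k. f k x) \<longlonglongrightarrow> \<phi> x * RL_left a n F x" if x: "x \<in> {a..b}" for x
    proof -
      have "(\<lambda>k. RL_left a n (G k) x) \<longlonglongrightarrow> RL_left a n F x"
      proof (rule lim_by_bound)
        show "\<bar>RL_left a n (G k) x - RL_left a n F x\<bar> \<le> 2 / real (Suc k) * c" for k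
          unfolding c_def by (rule RL_left_lip[OF True x Gc Fc]) (use GF in \<open>auto simp: abs_minus_commute\<close>)
        show "(\<lambda>k. 2 / real (Suc k) * c) \<longlonglongrightarrow> 0" by (rule tendsto_mult_left_zero[OF inv_Suc_tendsto])
      qed
      then show ?thesis unfolding f_def by (intro tendsto_mult tendsto_const)
    qed
    have "(\<lambda>k. integral {a..b} (f k)) \<longlonglongrightarrow> integral {a..b} (\<lambda>x. \<phi> x * RL_left a n F x)"
      by (rule dominated_convergence(2)[OF fint _ fb fconv]) (rule integrable_const_ivl)
    then show ?thesis using True unfolding fL by simp
  next
    case False
    have RLP: "RL_left_prim a b n F = PP a b n F" by (rule RL_left_prim_eq[OF ab n Fc F0])
    define P where "P k = PP a b n (G k)" for k
    define h where "h k s = (1 / Gamma n) * Jleft a (n - 1) (g k) s" for k s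
    have rep: "P k x = integral {a..x} (h k)" if "x \<in> {a..b}" for k x
      unfolding P_def h_def
      by (rule PP_smooth(1)[where G="G k" and g="g k", OF ab n G0[of k] sf(1) sf(2) _ that]) (use Gg in auto)
    have hint: "h k integrable_on {a..b}" for k
      unfolding h_def
      by (rule PP_smooth(2)[where G="G k" and g="g k", OF ab n G0[of k] sf(1) sf(2)]) (use Gg in auto)
    have Pdiff: "P k t - P k s = integral {s..t} (h k)" if "a \<le> s" "s \<le> t" "t \<le> b" for k s t
    proof -
      have "integral {a..s} (h k) + integral {s..t} (h k) = integral {a..t} (h k)"
        by (rule Henstock_Kurzweil_Integration.integral_combine) (use that integrable_on_subinterval[OF hint] in auto)
      then show ?thesis using rep[of s k] rep[of t k] that by simp
    qed
    have hbound: "\<exists>H. \<forall>s\<in>{a..b}. \<bar>h k s\<bar> \<le> H" for k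
    proof -
      obtain Bg where Bg: "\<And>t. t \<in> {a..b} \<Longrightarrow> \<bar>g k t\<bar> \<le> Bg" using cont_bounded[OF sf(1)[of k]] by blast
      have "\<bar>h k s\<bar> \<le> (1 / Gamma n) * (Bg * ((b - a) powr n / n))" if s: "s \<in> {a..b}" for s
      proof -
        have as: "a \<le> s" "s \<le> b" using s by auto
        have "\<bar>Jleft a (n - 1) (g k) s\<bar> \<le> Bg * ((s - a) powr (n - 1 + 1) / (n - 1 + 1))"
          by (rule Jleft_bound[OF as(1)]) (use n cont_meas_sub[OF sf(1)[of k] as(2)] Bg as in auto)
        also have "\<dots> \<le> Bg * ((b - a) powr n / n)"
        proof (rule mult_left_mono)
          have "(s - a) powr n \<le> (b - a) powr n" using as n by (intro powr_mono2) auto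
          then show "(s - a) powr (n - 1 + 1) / (n - 1 + 1) \<le> (b - a) powr n / n"
            using n by (simp add: divide_right_mono)
          show "0 \<le> Bg" using Bg[of a] ab by auto
        qed
        finally have J: "\<bar>Jleft a (n - 1) (g k) s\<bar> \<le> Bg * ((b - a) powr n / n)" .
        have "\<bar>h k s\<bar> = (1 / Gamma n) * \<bar>Jleft a (n - 1) (g k) s\<bar>" unfolding h_def using Gam by (simp add: abs_mult)
        also have "\<dots> \<le> (1 / Gamma n) * (Bg * ((b - a) powr n / n))" using J Gam by (intro mult_left_mono) auto
        finally show ?thesis .
      qed
      then show ?thesis by blast
    qed
    have habs: "h k absolutely_integrable_on {a..b}" for k
    proof -
      obtain H where H: "\<forall>s\<in>{a..b}. \<bar>h k s\<bar> \<le> H" using hbound by blast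
      have "(\<lambda>s. h k s * 1) absolutely_integrable_on {a..b}"
      proof (rule absolutely_integrable_bounded_measurable_product_real)
        show "h k \<in> borel_measurable (lebesgue_on {a..b})" by (rule integrable_imp_measurable[OF hint])
        show "bounded (h k ` {a..b})" unfolding bounded_iff using H by auto
      qed auto
      then show ?thesis by simp
    qed
    have Pa: "P k a = 0" for k using ab by (simp add: P_def PP_def Jleft_def)
    have LHSk: "P k b * \<phi> b - RS_integral (P k) \<phi> a b = L k"
      and PRS: "has_RS_integral (P k) \<phi> a b (RS_integral (P k) \<phi> a b)" for k
    proof -
      obtain H where H: "\<forall>s\<in>{a..b}. \<bar>h k s\<bar> \<le> H" using hbound by blast
      have A: "has_RS_integral \<phi> (P k) a b (integral {a..b} (\<lambda>t. \<phi> t * h k t))"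
        by (rule RS_indef_bv[OF ab bv habs _ Pdiff]) (use H in auto)
      have B: "has_RS_integral (P k) \<phi> a b (\<phi> b * P k b - \<phi> a * P k a - integral {a..b} (\<lambda>t. \<phi> t * h k t))"
        by (rule RS_ibp[OF ab A])
      have RSe: "RS_integral (P k) \<phi> a b = \<phi> b * P k b - integral {a..b} (\<lambda>t. \<phi> t * h k t)"
        using RS_integral_eqI[OF ab B] Pa by simp
      have "integral {a..b} (\<lambda>t. \<phi> t * h k t) = L k"
        unfolding L_def h_def by (simp add: mult.left_commute)
      then show "P k b * \<phi> b - RS_integral (P k) \<phi> a b = L k" using RSe by (simp add: mult.commute)
      show "has_RS_integral (P k) \<phi> a b (RS_integral (P k) \<phi> a b)" using B RS_integral_eqI[OF ab B] by simp
    qed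
    have PPc: "continuous_on {a..b} (PP a b n F)" by (rule PP_cont[OF ab n Fc F0])
    obtain I where I: "has_RS_integral (PP a b n F) \<phi> a b I" using RS_exists[OF ab PPc bv] by blast
    define C where "C = ((b - a) powr n / n) / Gamma n"
    have Pb: "\<bar>P k x - PP a b n F x\<bar> \<le> 2 / Suc k * C" if x: "x \<in> {a..b}" for k x
    proof -
      have "\<bar>P k x - PP a b n F x\<bar> \<le> 2 / Suc k * ((b - a) powr n / n) / Gamma n"
        unfolding P_def by (rule PP_diff_bound[OF n Gc Fc _ x]) (use GF in \<open>auto simp: abs_minus_commute\<close>)
      then show ?thesis by (simp add: C_def)
    qed
    have "L \<longlonglongrightarrow> PP a b n F b * \<phi> b - I"
    proof (rule lim_by_bound)
      show "\<bar>L k - (PP a b n F b * \<phi> b - I)\<bar> \<le> 2 / real (Suc k) * (C * \<bar>\<phi> b\<bar> + C * M\<phi>)" for k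
      proof -
        have 1: "\<bar>RS_integral (P k) \<phi> a b - I\<bar> \<le> 2 / Suc k * C * M\<phi>"
          by (rule RS_diff_bound[OF ab PRS[of k] I M\<phi>]) (use Pb in auto)
        have 2: "\<bar>P k b * \<phi> b - PP a b n F b * \<phi> b\<bar> \<le> 2 / Suc k * C * \<bar>\<phi> b\<bar>"
        proof -
          have "\<bar>P k b * \<phi> b - PP a b n F b * \<phi> b\<bar> = \<bar>P k b - PP a b n F b\<bar> * \<bar>\<phi> b\<bar>"
            by (simp add: abs_mult[symmetric] left_diff_distrib)
          also have "\<dots> \<le> 2 / Suc k * C * \<bar>\<phi> b\<bar>" using Pb[of b k] ab by (intro mult_right_mono) auto
          finally show ?thesis .
        qed
        have "L k - (PP a b n F b * \<phi> b - I) = (P k b * \<phi> b - PP a b n F b * \<phi> b) - (RS_integral (P k) \<phi> a b - I)"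
          using LHSk[of k] by simp
        then have "\<bar>L k - (PP a b n F b * \<phi> b - I)\<bar> \<le> \<bar>P k b * \<phi> b - PP a b n F b * \<phi> b\<bar> + \<bar>RS_integral (P k) \<phi> a b - I\<bar>"
          by (simp only: abs_triangle_ineq4)
        then have "\<bar>L k - (PP a b n F b * \<phi> b - I)\<bar> \<le> 2 / Suc k * C * \<bar>\<phi> b\<bar> + 2 / Suc k * C * M\<phi>"
          using 1 2 by linarith
        then show ?thesis by (simp add: algebra_simps)
      qed
      show "(\<lambda>k. 2 / real (Suc k) * (C * \<bar>\<phi> b\<bar> + C * M\<phi>)) \<longlonglongrightarrow> 0"
        by (rule tendsto_mult_left_zero[OF inv_Suc_tendsto])
    qed
    moreover have "hk_pair (RL_left_prim a b n F) \<phi> a b = PP a b n F b * \<phi> b - I"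
      unfolding RLP hk_pair_def using RS_integral_eqI[OF ab I] by simp
    ultimately show ?thesis using False by simp
  qed
  show ?thesis using LIMSEQ_unique[OF LHS RHS] unfolding \<psi>_def .
qed


theorem theorem4p8:
  fixes a b n :: real and F \<phi> :: "real \<Rightarrow> real"
  assumes "a < b" and "0 < n"
    and "continuous_on {a..b} F" and "F a = 0"
    and "bounded_var \<phi> a b"
  shows "(if 1 \<le> n then integral {a..b} (\<lambda>x. \<phi> x * RL_left a n F x)
          else hk_pair (RL_left_prim a b n F) \<phi> a b)
         = hk_pair F (RL_right b n \<phi>) a b"
  by (rule main_limits[OF less_imp_le[OF assms(1)] assms(2) assms(3) assms(4) assms(5)])

end
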